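(* Let $k$ be an algebraically closed field of characteristic $2$, $K = k((s))$, $L = k((t))$ with $t^3 = s$, and let $\sigma$ generate $\mathrm{Gal}(L/K)\cong\mathbb{Z}/3$. Let $a \in t^{-1}k[t^{-1}]$ be nonzero and in standard form, let $M = L[x]/(x^2-x-a)$, and let $N$ be the Galois closure of $M$ over $K$. Then $\mathrm{Gal}(N/K) \cong A_4$ if and only if $a$, viewed as a polynomial in $t^{-1}$, has no nonzero terms of degree divisible by $3$.
   Context: An element $a \in t^{-1}k[t^{-1}]$ is in standard form if, as a polynomial in $t^{-1}$, it has only terms of odd degree. Every $\mathbb{Z}/2$-extension of $k((t))$ is given by $x^2-x=a$ for a unique $a$ in standard form, and its ramification break is the degree of $a$ in $t^{-1}$. *)

theory Defs
  imports "HOL-Computational_Algebra.Computational_Algebra" "HOL-Algebra.Sym_Groups"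
begin

definition alg_closed_type :: "'a::field itself \<Rightarrow> bool" where
  "alg_closed_type _ \<longleftrightarrow> (\<forall>p :: 'a poly. degree p > 0 \<longrightarrow> (\<exists>x. poly p x = 0))"

definition is_subfield :: "'a::field set \<Rightarrow> bool" where
  "is_subfield F \<longleftrightarrow> 0 \<in> F \<and> 1 \<in> F \<and>
     (\<forall>x\<in>F. \<forall>y\<in>F. x + y \<in> F \<and> x * y \<in> F) \<and>
     (\<forall>x\<in>F. - x \<in> F \<and> inverse x \<in> F)"

definition gen_field :: "'a::field set \<Rightarrow> 'a set" where
  "gen_field S = \<Inter>{F. is_subfield F \<and> S \<subseteq> F}"

definition hom_on :: "'a::field set \<Rightarrow> ('a \<Rightarrow> 'b::field) \<Rightarrow> bool" where
  "hom_on S f \<longleftrightarrow> f 1 = 1 \<and> (\<forall>x\<in>S. \<forall>y\<in>S. f (x + y) = f x + f y \<and> f (x * y) = f x * f y)"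

definition embeddings_over :: "'a::field set \<Rightarrow> 'a set \<Rightarrow> ('a \<Rightarrow> 'a) set" where
  "embeddings_over F0 F = {\<tau>. hom_on F \<tau> \<and> (\<forall>x\<in>F0. \<tau> x = x)}"

text \<open>Galois closure of F over F0 inside an algebraically closed ambient field:
  the compositum of all conjugates of F over F0.\<close>
definition galois_closure :: "'a::field set \<Rightarrow> 'a set \<Rightarrow> 'a set" where
  "galois_closure F0 F = gen_field (\<Union>\<tau>\<in>embeddings_over F0 F. \<tau> ` F)"

text \<open>Galois group Gal(N/F0): field automorphisms of N fixing F0 (extended by the
  identity outside N), with composition.\<close>
definition galois_group :: "'a::field set \<Rightarrow> 'a set \<Rightarrow> ('a \<Rightarrow> 'a) monoid" where
  "galois_group F0 N =
     \<lparr> carrier = {\<sigma>. hom_on N \<sigma> \<and> bij_betw \<sigma> N N \<and> (\<forall>x\<in>F0. \<sigma> x = x) \<and> (\<forall>x. x \<notin> N \<longrightarrow> \<sigma> x = x)},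
       mult = (\<lambda>\<sigma> \<tau>. \<sigma> \<circ> \<tau>),
       one = id \<rparr>"

definition standard_form :: "'a::zero fls \<Rightarrow> bool" where
  "standard_form a \<longleftrightarrow> (\<forall>n. fls_nth a n \<noteq> 0 \<longrightarrow> n < 0 \<and> odd n)"

end

theory Submission
  imports Defs
begin


section \<open>Generic subfield and homomorphism lemmas\<close>

lemma subfield_0: "is_subfield F \<Longrightarrow> 0 \<in> F" by (simp add: is_subfield_def)
lemma subfield_1: "is_subfield F \<Longrightarrow> 1 \<in> F" by (simp add: is_subfield_def)
lemma subfield_add: "is_subfield F \<Longrightarrow> x \<in> F \<Longrightarrow> y \<in> F \<Longrightarrow> x + y \<in> F" by (simp add: is_subfield_def)
lemma subfield_mult: "is_subfield F \<Longrightarrow> x \<in> F \<Longrightarrow> y \<in> F \<Longrightarrow> x * y \<in> F" by (simp add: is_subfield_def)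
lemma subfield_uminus: "is_subfield F \<Longrightarrow> x \<in> F \<Longrightarrow> - x \<in> F" by (simp add: is_subfield_def)
lemma subfield_inverse: "is_subfield F \<Longrightarrow> x \<in> F \<Longrightarrow> inverse x \<in> F" by (simp add: is_subfield_def)
lemma subfield_diff: "is_subfield F \<Longrightarrow> x \<in> F \<Longrightarrow> y \<in> F \<Longrightarrow> x - y \<in> F"
  using subfield_add subfield_uminus by (metis diff_conv_add_uminus)
lemma subfield_divide: "is_subfield F \<Longrightarrow> x \<in> F \<Longrightarrow> y \<in> F \<Longrightarrow> x / y \<in> F"
  by (simp add: divide_inverse subfield_inverse subfield_mult)
lemma subfield_power: "is_subfield F \<Longrightarrow> x \<in> F \<Longrightarrow> x ^ n \<in> F"
  by (induction n) (auto simp: subfield_1 subfield_mult)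

lemmas subfield_closed = subfield_0 subfield_1 subfield_add subfield_mult subfield_uminus
  subfield_inverse subfield_diff subfield_divide subfield_power

lemma subfield_Inter: "(\<And>F. F \<in> A \<Longrightarrow> is_subfield F) \<Longrightarrow> is_subfield (\<Inter>A)"
  unfolding is_subfield_def by blast

lemma subfield_UNIV: "is_subfield UNIV" by (simp add: is_subfield_def)

lemma gen_field_subfield: "is_subfield (gen_field S)"
  unfolding gen_field_def by (rule subfield_Inter) auto

lemma gen_field_subset: "S \<subseteq> gen_field S"
  unfolding gen_field_def by auto

lemma gen_field_min: "is_subfield F \<Longrightarrow> S \<subseteq> F \<Longrightarrow> gen_field S \<subseteq> F"
  unfolding gen_field_def by auto

lemma gen_field_mono: "S \<subseteq> T \<Longrightarrow> gen_field S \<subseteq> gen_field T"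
  by (meson gen_field_min gen_field_subfield gen_field_subset order_trans)

lemma gen_field_idem: "is_subfield F \<Longrightarrow> gen_field F = F"
  by (simp add: gen_field_min gen_field_subset subset_antisym)

lemma gen_field_union_gen: "gen_field (A \<union> gen_field B) = gen_field (A \<union> B)"
proof
  show "gen_field (A \<union> gen_field B) \<subseteq> gen_field (A \<union> B)"
    by (intro gen_field_min gen_field_subfield)
       (meson Un_least gen_field_mono gen_field_subset le_sup_iff order_trans sup_ge2)
  show "gen_field (A \<union> B) \<subseteq> gen_field (A \<union> gen_field B)"
    by (intro gen_field_mono) (use gen_field_subset in blast)
qed

lemma gen_field_insert_gen: "gen_field (insert b (gen_field S)) = gen_field (insert b S)"
  using gen_field_union_gen[of "{b}" S] by simp

locale fhom =
  fixes E :: "'a::field set" and f :: "'a \<Rightarrow> 'b::field"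
  assumes sub: "is_subfield E" and hom: "hom_on E f"
begin

lemma one [simp]: "f 1 = 1" using hom by (simp add: hom_on_def)
lemma add: "x \<in> E \<Longrightarrow> y \<in> E \<Longrightarrow> f (x + y) = f x + f y" using hom by (simp add: hom_on_def)
lemma mult: "x \<in> E \<Longrightarrow> y \<in> E \<Longrightarrow> f (x * y) = f x * f y" using hom by (simp add: hom_on_def)
lemma zero [simp]: "f 0 = 0"
proof -
  have "f (0 + 0) = f 0 + f 0" using add[OF subfield_0[OF sub] subfield_0[OF sub]] .
  hence "f 0 = f 0 + f 0" by (simp only: add_0)
  thus ?thesis by (rule add_cancel_right_right[THEN iffD1])
qed
lemma uminus: "x \<in> E \<Longrightarrow> f (- x) = - f x"
proof -
  assume x: "x \<in> E"
  have "f (x + - x) = f x + f (- x)" using add[OF x subfield_uminus[OF sub x]] .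
  hence "f x + f (- x) = 0" by simp
  thus ?thesis by (simp add: add_eq_0_iff)
qed
lemma diff: "x \<in> E \<Longrightarrow> y \<in> E \<Longrightarrow> f (x - y) = f x - f y"
proof -
  assume xy: "x \<in> E" "y \<in> E"
  have "f (x + - y) = f x + f (- y)" using add[OF xy(1) subfield_uminus[OF sub xy(2)]] .
  thus ?thesis using uminus[OF xy(2)] by simp
qed
lemma nonzero: "x \<in> E \<Longrightarrow> x \<noteq> 0 \<Longrightarrow> f x \<noteq> 0"
proof
  assume x: "x \<in> E" "x \<noteq> 0" "f x = 0"
  have "f (x * inverse x) = f x * f (inverse x)" using mult[OF x(1) subfield_inverse[OF sub x(1)]] .
  thus False using x by simp
qed
lemma inverse: "x \<in> E \<Longrightarrow> f (inverse x) = inverse (f x)"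
proof (cases "x = 0")
  case False
  assume x: "x \<in> E"
  have "f (x * inverse x) = f x * f (inverse x)" using mult[OF x(1) subfield_inverse[OF sub x(1)]] .
  hence "f x * f (inverse x) = 1" using False by simp
  thus ?thesis by (metis inverse_unique)
qed simp
lemma power: "x \<in> E \<Longrightarrow> f (x ^ n) = f x ^ n"
  by (induction n) (auto simp: mult subfield_power[OF sub])
lemma inj: "inj_on f E"
proof (rule inj_onI)
  fix x y assume "x \<in> E" "y \<in> E" "f x = f y"
  hence "f (x - y) = 0" by (simp add: diff)
  moreover have "x - y \<in> E" using \<open>x \<in> E\<close> \<open>y \<in> E\<close> subfield_diff[OF sub] by blast
  ultimately show "x = y" using nonzero by (metis eq_iff_diff_eq_0)
qed
lemma image_subfield: "is_subfield (f ` E)"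
  unfolding is_subfield_def
proof (intro conjI ballI)
  show "0 \<in> f ` E" using zero subfield_0[OF sub] by (metis image_eqI)
  show "1 \<in> f ` E" using one subfield_1[OF sub] by (metis image_eqI)
  fix x y assume "x \<in> f ` E" "y \<in> f ` E"
  then obtain a b where ab: "a \<in> E" "b \<in> E" "x = f a" "y = f b" by auto
  show "x + y \<in> f ` E" using ab add subfield_add[OF sub] by (metis image_eqI)
  show "x * y \<in> f ` E" using ab mult subfield_mult[OF sub] by (metis image_eqI)
next
  fix x assume "x \<in> f ` E"
  then obtain a where ab: "a \<in> E" "x = f a" by auto
  show "- x \<in> f ` E" using ab uminus subfield_uminus[OF sub] by (metis image_eqI)
  show "inverse x \<in> f ` E" using ab inverse subfield_inverse[OF sub] by (metis image_eqI)
qed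

lemma preimage_subfield:
  assumes G: "is_subfield G" shows "is_subfield {x\<in>E. f x \<in> G}"
  unfolding is_subfield_def
proof (intro conjI ballI)
  show "0 \<in> {x \<in> E. f x \<in> G}" using sub G by (simp add: subfield_0)
  show "1 \<in> {x \<in> E. f x \<in> G}" using sub G by (simp add: subfield_1)
  fix x y assume x: "x \<in> {x \<in> E. f x \<in> G}" and y: "y \<in> {x \<in> E. f x \<in> G}"
  show "x + y \<in> {x \<in> E. f x \<in> G}" using x y sub G by (simp add: add subfield_add)
  show "x * y \<in> {x \<in> E. f x \<in> G}" using x y sub G by (simp add: mult subfield_mult)
next
  fix x assume x: "x \<in> {x \<in> E. f x \<in> G}"
  show "- x \<in> {x \<in> E. f x \<in> G}" using x sub G by (simp add: uminus subfield_uminus)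
  show "inverse x \<in> {x \<in> E. f x \<in> G}" using x sub G by (simp add: inverse subfield_inverse)
qed

end

lemma fhom_gen_image:
  assumes "fhom (gen_field S) f"
  shows "f ` gen_field S = gen_field (f ` S)"
proof
  interpret fhom "gen_field S" f by fact
  let ?P = "{x \<in> gen_field S. f x \<in> gen_field (f ` S)}"
  have "gen_field S \<subseteq> ?P"
    apply (rule gen_field_min[OF preimage_subfield[OF gen_field_subfield]])
    using gen_field_subset[of S] gen_field_subset[of "f ` S"] by auto
  thus "f ` gen_field S \<subseteq> gen_field (f ` S)" by auto
  show "gen_field (f ` S) \<subseteq> f ` gen_field S"
    by (rule gen_field_min[OF image_subfield]) (use gen_field_subset in auto)
qed

lemma fhom_agree:
  assumes "fhom (gen_field S) f" "fhom (gen_field S) g" "\<And>x. x \<in> S \<Longrightarrow> f x = g x"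
    and "x \<in> gen_field S"
  shows "f x = g x"
proof -
  interpret F: fhom "gen_field S" f by fact
  interpret G: fhom "gen_field S" g by fact
  have sub: "is_subfield (gen_field S)" by (rule gen_field_subfield)
  have "is_subfield {x \<in> gen_field S. f x = g x}"
    unfolding is_subfield_def
  proof (intro conjI ballI)
    show "0 \<in> {x \<in> gen_field S. f x = g x}" using sub by (simp add: subfield_0)
    show "1 \<in> {x \<in> gen_field S. f x = g x}" using sub by (simp add: subfield_1)
    fix x y assume x: "x \<in> {x \<in> gen_field S. f x = g x}" and y: "y \<in> {x \<in> gen_field S. f x = g x}"
    show "x + y \<in> {x \<in> gen_field S. f x = g x}" using x y sub by (simp add: F.add G.add subfield_add)
    show "x * y \<in> {x \<in> gen_field S. f x = g x}" using x y sub by (simp add: F.mult G.mult subfield_mult)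
  next
    fix x assume x: "x \<in> {x \<in> gen_field S. f x = g x}"
    show "- x \<in> {x \<in> gen_field S. f x = g x}" using x sub by (simp add: F.uminus G.uminus subfield_uminus)
    show "inverse x \<in> {x \<in> gen_field S. f x = g x}" using x sub by (simp add: F.inverse G.inverse subfield_inverse)
  qed
  hence "gen_field S \<subseteq> {x \<in> gen_field S. f x = g x}"
    using assms(3) gen_field_subset by (intro gen_field_min) auto
  thus ?thesis using assms(4) by auto
qed


section \<open>Characteristic 2 and Artin-Schreier quadratic extensions\<close>

lemma c2_add_self: "(2::'b::field) = 0 \<Longrightarrow> x + x = (0::'b)"
  by (metis mult_2 mult_zero_left)
lemma c2_neg: "(2::'b::field) = 0 \<Longrightarrow> - x = (x::'b)"
  by (metis add_eq_0_iff2 c2_add_self)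
lemma c2_minus: "(2::'b::field) = 0 \<Longrightarrow> x - y = (x::'b) + y"
  by (metis c2_neg diff_conv_add_uminus)
lemma c2_sq: "(2::'b::field) = 0 \<Longrightarrow> (x + y)^2 = x^2 + (y::'b)^2"
  by (simp add: power2_sum)

definition adj :: "'b::field set \<Rightarrow> 'b \<Rightarrow> 'b set" where
  "adj F b = {x + y * b | x y. x \<in> F \<and> y \<in> F}"

locale ASext =
  fixes F :: "'b::field set" and b :: 'b and c :: 'b
  assumes c2: "(2::'b) = 0" and sub: "is_subfield F" and notin: "b \<notin> F"
    and cin: "c \<in> F" and eq: "b^2 = b + c"
begin

lemma neg: "- x = (x::'b)" using c2_neg[OF c2] .
lemma minus: "x - y = (x::'b) + y" using c2_minus[OF c2] .
lemma addself: "x + x = (0::'b)" using c2_add_self[OF c2] .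

lemma unique:
  assumes "x \<in> F" "y \<in> F" "x' \<in> F" "y' \<in> F" "x + y * b = x' + y' * b"
  shows "x = x' \<and> y = y'"
proof (cases "y = y'")
  case True thus ?thesis using assms(5) by simp
next
  case False
  have "(y - y') * b = (x + y * b) - x - y' * b" by (simp add: algebra_simps)
  also have "\<dots> = x' - x" using assms(5) by (simp add: algebra_simps)
  finally have "(y - y') * b = x' - x" .
  hence "b = (x' - x) / (y - y')" using False by (simp add: field_simps)
  moreover have "(x' - x) / (y - y') \<in> F" using assms sub by (intro subfield_divide subfield_diff) auto
  ultimately have "b \<in> F" by simp
  thus ?thesis using notin by simp
qed

lemma mult_formula:
  "(x + y * b) * (x' + y' * b) = (x * x' + y * y' * c) + (x * y' + x' * y + y * y') * b"
proof -
  have "(x + y * b) * (x' + y' * b) = x * x' + (x * y' + x' * y) * b + y * y' * b^2"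
    by (simp add: algebra_simps power2_eq_square)
  also have "\<dots> = (x * x' + y * y' * c) + (x * y' + x' * y + y * y') * b"
    by (simp add: eq algebra_simps)
  finally show ?thesis .
qed

lemma adj_subfield: "is_subfield (adj F b)"
  unfolding is_subfield_def
proof (intro conjI ballI)
  show "0 \<in> adj F b" unfolding adj_def using sub by (force intro: subfield_0)
  show "1 \<in> adj F b" unfolding adj_def using sub by (force intro: subfield_0 subfield_1)
  fix v w assume "v \<in> adj F b" "w \<in> adj F b"
  then obtain x y x' y' where xy: "x \<in> F" "y \<in> F" "x' \<in> F" "y' \<in> F" "v = x + y * b" "w = x' + y' * b"
    unfolding adj_def by blast
  have "v + w = (x + x') + (y + y') * b" using xy by (simp add: algebra_simps)
  moreover have "x + x' \<in> F" "y + y' \<in> F" using xy sub by (auto intro: subfield_add)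
  ultimately show "v + w \<in> adj F b" unfolding adj_def by blast
  have "v * w = (x * x' + y * y' * c) + (x * y' + x' * y + y * y') * b" using xy mult_formula by simp
  thus "v * w \<in> adj F b" unfolding adj_def using xy sub cin by (auto intro!: subfield_add subfield_mult)
next
  fix v assume "v \<in> adj F b"
  then obtain x y where xy: "x \<in> F" "y \<in> F" "v = x + y * b" unfolding adj_def by blast
  show "- v \<in> adj F b" using \<open>v \<in> adj F b\<close> by (simp add: neg)
  show "inverse v \<in> adj F b"
  proof (cases "v = 0")
    case True thus ?thesis unfolding adj_def using sub by (force intro: subfield_0)
  next
    case False
    define N where "N = x * x + x * y + y * y * c"
    have NF: "N \<in> F" unfolding N_def using xy sub cin by (auto intro!: subfield_add subfield_mult)
    have prod: "v * ((x + y) + y * b) = N"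
      using mult_formula[of x y "x + y" y] xy unfolding N_def by (simp add: algebra_simps c2)
    have Nnz: "N \<noteq> 0"
    proof
      assume "N = 0"
      hence "(x + y) + y * b = 0" using prod False by simp
      hence "x + y * b = 0"
      proof (cases "y = 0")
        case True thus ?thesis using \<open>(x + y) + y * b = 0\<close> by simp
      next
        case False
        have "y * b = - (x + y)" using \<open>(x + y) + y * b = 0\<close> by (simp add: add_eq_0_iff2 add.commute)
        hence "y * b = x + y" by (simp add: neg)
        hence "b = (x + y) / y" using False by (simp add: field_simps)
        hence "b \<in> F" using xy sub by (simp add: subfield_divide subfield_add)
        thus ?thesis using notin by simp
      qed
      thus False using False xy by simp
    qed
    have "inverse v = ((x + y) + y * b) / N" using prod Nnz False by (simp add: field_simps)
    also have "\<dots> = (x + y) / N + (y / N) * b" by (simp add: add_divide_distrib)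
    finally have "inverse v = (x + y) / N + (y / N) * b" .
    moreover have "(x + y) / N \<in> F" "y / N \<in> F" using xy NF sub by (auto intro!: subfield_add subfield_divide)
    ultimately show ?thesis unfolding adj_def by blast
  qed
qed

lemma F_sub_adj: "F \<subseteq> adj F b"
  unfolding adj_def using sub by (force intro: subfield_0)

lemma b_in_adj: "b \<in> adj F b"
  unfolding adj_def using sub by (force intro: subfield_0 subfield_1)

lemma gen_eq_adj: "gen_field (insert b F) = adj F b"
proof
  show "gen_field (insert b F) \<subseteq> adj F b"
    using gen_field_min[OF adj_subfield] F_sub_adj b_in_adj by blast
  show "adj F b \<subseteq> gen_field (insert b F)"
  proof
    fix v assume "v \<in> adj F b"
    then obtain x y where xy: "x \<in> F" "y \<in> F" "v = x + y * b" unfolding adj_def by blast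
    have G: "is_subfield (gen_field (insert b F))" by (rule gen_field_subfield)
    have "insert b F \<subseteq> gen_field (insert b F)" by (rule gen_field_subset)
    thus "v \<in> gen_field (insert b F)" using xy G by (auto intro!: subfield_add subfield_mult)
  qed
qed

lemma descent:
  assumes d: "d \<in> F" and w: "w \<in> gen_field (insert b F)" and wd: "w^2 - w = d"
  shows "\<exists>x\<in>F. x^2 - x = d \<or> x^2 - x = d - c"
proof -
  obtain x y where xy: "x \<in> F" "y \<in> F" "w = x + y * b" using w gen_eq_adj unfolding adj_def by blast
  have "w^2 - w = w^2 + w" by (rule minus)
  also have "\<dots> = x^2 + y^2 * b^2 + x + y * b" using xy by (simp add: c2_sq[OF c2] power_mult_distrib)
  also have "\<dots> = (x^2 + x + y^2 * c) + (y^2 + y) * b" using eq by (simp add: algebra_simps)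
  finally have "w^2 - w = (x^2 + x + y^2 * c) + (y^2 + y) * b" .
  hence "d + 0 * b = (x^2 + x + y^2 * c) + (y^2 + y) * b" using wd by simp
  hence u: "d = x^2 + x + y^2 * c \<and> 0 = y^2 + y"
    using unique[of d 0 "x^2 + x + y^2 * c" "y^2 + y"] d xy sub cin
    by (auto intro!: subfield_add subfield_mult subfield_power subfield_0)
  hence "y * (y + 1) = 0" by (simp add: power2_eq_square algebra_simps)
  hence "y = 0 \<or> y + 1 = 0" by simp
  hence "y = 0 \<or> y = 1" using add_eq_0_iff2[of y 1] neg[of 1] by simp
  thus ?thesis
  proof
    assume "y = 0"
    hence "x^2 - x = d" using u minus[of "x^2" x] by simp
    thus ?thesis using xy by blast
  next
    assume "y = 1"
    hence "x^2 - x = d - c" using u minus[of "x^2" x] by simp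
    thus ?thesis using xy by blast
  qed
qed

lemma extend:
  assumes phi: "fhom F \<phi>" and g: "g^2 = g + \<phi> c"
  shows "\<exists>\<psi>. fhom (gen_field (insert b F)) \<psi> \<and> (\<forall>x\<in>F. \<psi> x = \<phi> x) \<and> \<psi> b = g"
proof -
  interpret P: fhom F \<phi> by fact
  define co where "co v = (SOME p. p \<in> F \<times> F \<and> v = fst p + snd p * b)" for v
  have co: "co (x + y * b) = (x, y)" if "x \<in> F" "y \<in> F" for x y
  proof -
    have ex: "\<exists>p. p \<in> F \<times> F \<and> x + y * b = fst p + snd p * b" using that by auto
    have "co (x + y * b) \<in> F \<times> F \<and> x + y * b = fst (co (x + y * b)) + snd (co (x + y * b)) * b"
      unfolding co_def by (rule someI_ex[OF ex])
    thus ?thesis using unique[of x y] that by (metis mem_Times_iff prod.collapse)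
  qed
  define \<psi> where "\<psi> v = \<phi> (fst (co v)) + \<phi> (snd (co v)) * g" for v
  have psi: "\<psi> (x + y * b) = \<phi> x + \<phi> y * g" if "x \<in> F" "y \<in> F" for x y
    using co[OF that] unfolding \<psi>_def by simp
  have 0: "0 \<in> F" and 1: "1 \<in> F" using sub by (auto intro: subfield_0 subfield_1)
  have "hom_on (adj F b) \<psi>"
    unfolding hom_on_def
  proof (intro conjI ballI)
    show "\<psi> 1 = 1" using psi[OF 1 0] by simp
    fix v w assume "v \<in> adj F b" "w \<in> adj F b"
    then obtain x y x' y' where xy: "x \<in> F" "y \<in> F" "x' \<in> F" "y' \<in> F" "v = x + y * b" "w = x' + y' * b"
      unfolding adj_def by blast
    have "v + w = (x + x') + (y + y') * b" using xy by (simp add: algebra_simps)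
    moreover have "x + x' \<in> F" "y + y' \<in> F" using xy sub by (auto intro: subfield_add)
    ultimately have "\<psi> (v + w) = \<phi> (x + x') + \<phi> (y + y') * g" using psi by simp
    also have "\<dots> = (\<phi> x + \<phi> y * g) + (\<phi> x' + \<phi> y' * g)"
      using xy by (simp add: P.add algebra_simps)
    finally show "\<psi> (v + w) = \<psi> v + \<psi> w" using psi xy by simp
    have "v * w = (x * x' + y * y' * c) + (x * y' + x' * y + y * y') * b" using xy mult_formula by simp
    moreover have "x * x' + y * y' * c \<in> F" "x * y' + x' * y + y * y' \<in> F"
      using xy sub cin by (auto intro!: subfield_add subfield_mult)
    ultimately have "\<psi> (v * w) = \<phi> (x * x' + y * y' * c) + \<phi> (x * y' + x' * y + y * y') * g"
      using psi by simp
    also have "\<dots> = \<phi> x * \<phi> x' + \<phi> y * \<phi> y' * \<phi> c + (\<phi> x * \<phi> y' + \<phi> x' * \<phi> y + \<phi> y * \<phi> y') * g"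
      using xy sub cin by (simp add: P.add P.mult subfield_add subfield_mult)
    also have "\<dots> = \<phi> x * \<phi> x' + \<phi> y * \<phi> y' * (g + \<phi> c) + (\<phi> x * \<phi> y' + \<phi> x' * \<phi> y) * g"
      by (simp add: algebra_simps)
    also have "\<dots> = \<phi> x * \<phi> x' + \<phi> y * \<phi> y' * (g * g) + (\<phi> x * \<phi> y' + \<phi> x' * \<phi> y) * g"
      using g by (simp add: power2_eq_square)
    also have "\<dots> = (\<phi> x + \<phi> y * g) * (\<phi> x' + \<phi> y' * g)"
      by (simp add: algebra_simps)
    also have "\<dots> = \<psi> v * \<psi> w" using psi xy by simp
    finally show "\<psi> (v * w) = \<psi> v * \<psi> w" .
  qed
  hence "fhom (gen_field (insert b F)) \<psi>"
    using gen_eq_adj adj_subfield by (simp add: fhom_def)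
  moreover have "\<forall>x\<in>F. \<psi> x = \<phi> x" using psi[OF _ 0] by (metis add_0_right mult_zero_left P.zero)
  moreover have "\<psi> b = g" using psi[OF 0 1] by simp
  ultimately show ?thesis by blast
qed

end


section \<open>Laurent series facts\<close>

notation fls_nth (infixl "$$" 75)

subsection \<open>Rotation t \<mapsto> c t\<close>

lemma cp3_nth: "fls_compose_power g 3 $$ n = (if 3 dvd n then g $$ (n div 3) else 0)"
  using fls_nth_compose_power[of 3 g n] by simp


definition rot :: "'a::field \<Rightarrow> 'a fls \<Rightarrow> 'a fls" where
  "rot c f = Abs_fls (\<lambda>n. c powi n * f $$ n)"

lemma rot_nth [simp]: "rot c f $$ n = c powi n * f $$ n"
  unfolding rot_def
  by (rule nth_Abs_fls_lower_bound[where N = "fls_subdegree f"]) simp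

lemma rot_subdegree: "c \<noteq> 0 \<Longrightarrow> fls_subdegree (rot c f) = fls_subdegree f"
proof (cases "f = 0")
  case True
  hence "rot c f = 0" by (simp add: fls_eq_iff)
  thus ?thesis using True by simp
next
  case False
  assume c: "c \<noteq> 0"
  show ?thesis
    by (rule fls_subdegree_eqI) (use c False in auto)
qed

lemma rot_add: "rot c (f + g) = rot c f + rot c g"
  by (simp add: fls_eq_iff algebra_simps)
lemma rot_uminus: "rot c (- f) = - rot c f"
  by (simp add: fls_eq_iff)
lemma rot_diff: "rot c (f - g) = rot c f - rot c g"
  by (simp add: fls_eq_iff algebra_simps)
lemma rot_one: "rot c 1 = 1"
  by (simp add: fls_eq_iff)
lemma rot_const: "rot c (fls_const a) = fls_const a"
  by (simp add: fls_eq_iff)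
lemma rot_X: "rot c fls_X = fls_const c * fls_X"
  by (simp add: fls_eq_iff)
lemma rot_1: "rot 1 f = f"
  by (simp add: fls_eq_iff)
lemma rot_rot: "rot c (rot d f) = rot (c * d) f"
  by (simp add: fls_eq_iff power_int_mult_distrib)

lemma rot_mult:
  assumes c: "c \<noteq> 0"
  shows "rot c (f * g) = rot c f * rot c g"
proof (rule fls_eqI)
  fix n
  have "(rot c f * rot c g) $$ n = (\<Sum>i=fls_subdegree f..n - fls_subdegree g. rot c f $$ i * rot c g $$ (n - i))"
    using fls_times_nth(2)[of "rot c f" "rot c g" n] by (simp add: rot_subdegree[OF c])
  also have "\<dots> = (\<Sum>i=fls_subdegree f..n - fls_subdegree g. c powi n * (f $$ i * g $$ (n - i)))"
  proof (rule sum.cong)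
    fix i
    have "c powi n = c powi i * c powi (n - i)" using power_int_add[of c i "n - i"] c by simp
    thus "rot c f $$ i * rot c g $$ (n - i) = c powi n * (f $$ i * g $$ (n - i))" by simp
  qed simp
  also have "\<dots> = c powi n * (f * g) $$ n"
    unfolding fls_times_nth(2)[of f g n] by (simp add: sum_distrib_left)
  finally show "rot c (f * g) $$ n = (rot c f * rot c g) $$ n" by simp
qed

lemma rot_power: "c \<noteq> 0 \<Longrightarrow> rot c (f ^ n) = rot c f ^ n"
  by (induction n) (simp_all add: rot_one rot_mult)

lemma rot_compose3:
  assumes "c ^ 3 = 1"
  shows "rot c (fls_compose_power g 3) = fls_compose_power g 3"
proof (rule fls_eqI)
  fix n
  show "rot c (fls_compose_power g 3) $$ n = fls_compose_power g 3 $$ n"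
  proof (cases "3 dvd n")
    case True
    then obtain m where m: "n = 3 * m" by blast
    have "c powi n = (c ^ 3) powi m" unfolding m by (simp add: power_int_mult)
    thus ?thesis using assms True by (simp add: cp3_nth)
  next
    case False thus ?thesis by (simp add: cp3_nth)
  qed
qed

lemma rot_standard: "standard_form f \<Longrightarrow> standard_form (rot c f)"
  unfolding standard_form_def by simp

definition part :: "'a::zero fls \<Rightarrow> int \<Rightarrow> 'a fls" where
  "part f r = Abs_fls (\<lambda>m. f $$ (3 * m + r))"

lemma part_nth [simp]: "0 \<le> r \<Longrightarrow> r \<le> 2 \<Longrightarrow> part f r $$ m = f $$ (3 * m + r)"
  unfolding part_def
  by (rule nth_Abs_fls_lower_bound[where N = "min (-1) (fls_subdegree f)"]) auto

lemma X_times_nth: "(fls_X * g) $$ n = (g :: 'a::field fls) $$ (n - 1)"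
  by (simp add: fls_X_times_conv_shift)

lemma X2_times_nth: "(fls_X ^ 2 * g) $$ n = (g :: 'a::field fls) $$ (n - 2)"
proof -
  have e: "fls_X ^ 2 * g = fls_X * (fls_X * g)" by (simp only: power2_eq_square mult.assoc)
  show ?thesis unfolding e X_times_nth by simp
qed

lemma decomp3:
  fixes f :: "'a::field fls"
  shows "f = fls_compose_power (part f 0) 3 + fls_X * fls_compose_power (part f 1) 3
             + fls_X ^ 2 * fls_compose_power (part f 2) 3"
proof (rule fls_eqI)
  fix n :: int
  have "n mod 3 = 0 \<or> n mod 3 = 1 \<or> n mod 3 = 2" by auto
  thus "f $$ n = (fls_compose_power (part f 0) 3 + fls_X * fls_compose_power (part f 1) 3
             + fls_X ^ 2 * fls_compose_power (part f 2) 3) $$ n"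
  proof (elim disjE)
    assume h: "n mod 3 = 0"
    hence "\<not> 3 dvd (n - 1)" "\<not> 3 dvd (n - 2)" "3 dvd n" by presburger+
    moreover have "3 * (n div 3) + 0 = n" using h by presburger
    ultimately show ?thesis by (simp add: X_times_nth X2_times_nth cp3_nth)
  next
    assume h: "n mod 3 = 1"
    hence "\<not> 3 dvd (n - 2)" "3 dvd (n - 1)" "\<not> 3 dvd n" by presburger+
    moreover have "3 * ((n - 1) div 3) + 1 = n" using h by presburger
    ultimately show ?thesis by (simp add: X_times_nth X2_times_nth cp3_nth)
  next
    assume h: "n mod 3 = 2"
    hence "3 dvd (n - 2)" "\<not> 3 dvd (n - 1)" "\<not> 3 dvd n" by presburger+
    moreover have "3 * ((n - 2) div 3) + 2 = n" using h by presburger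
    ultimately show ?thesis by (simp add: X_times_nth X2_times_nth cp3_nth)
  qed
qed

lemma AS_fls:
  fixes b y :: "'a::field fls"
  assumes sf: "standard_form b" and nz: "b \<noteq> 0"
  shows "y^2 - y \<noteq> b"
proof
  assume eq: "y^2 - y = b"
  show False
  proof (cases "y = 0")
    case True thus False using eq nz by simp
  next
    case False
    define m where "m = fls_subdegree y"
    show False
    proof (cases "m < 0")
      case True
      have "(y * y) $$ (m + m) = y $$ m * y $$ m"
        unfolding m_def by (rule fls_times_base)
      moreover have "y $$ m \<noteq> 0" unfolding m_def using False by simp
      ultimately have a: "(y^2) $$ (m + m) \<noteq> 0" by (simp add: power2_eq_square)
      have "y $$ (m + m) = 0" using True unfolding m_def by simp
      hence "b $$ (m + m) \<noteq> 0" using a eq[symmetric] by simp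
      moreover have "even (m + m)" by simp
      ultimately show False using sf unfolding standard_form_def by blast
    next
      case False
      obtain n where n: "b $$ n \<noteq> 0" using nz fls_eq_iff[of b 0] by auto
      hence "n < 0" using sf unfolding standard_form_def by auto
      have "(y * y) $$ n = 0"
        by (rule fls_times_nth_eq0) (use False \<open>n < 0\<close> m_def in auto)
      moreover have "y $$ n = 0" using False \<open>n < 0\<close> m_def by simp
      ultimately have "b $$ n = 0" using eq[symmetric] by (simp add: power2_eq_square)
      thus False using n by simp
    qed
  qed
qed


lemma roots_AS:
  assumes c2: "(2::'b::field) = 0" and "x^2 - x = y^2 - (y::'b)"
  shows "x = y \<or> x = y + 1"
proof -
  have "(x - y) * (x + y - 1) = (x^2 - x) - (y^2 - y)" by (simp add: algebra_simps power2_eq_square)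
  hence "(x - y) * (x + y - 1) = 0" using assms by simp
  hence "x = y \<or> x + y = 1" by auto
  moreover have "x = y + 1" if h: "x + y = 1"
  proof -
    have "x = 1 - y" using h by (simp add: eq_diff_eq)
    also have "\<dots> = 1 + y" using c2_minus[OF c2] by simp
    finally show ?thesis by simp
  qed
  ultimately show ?thesis by blast
qed

lemma X3_cp: "(fls_X :: 'a::field fls) ^ 3 = fls_compose_power fls_X 3"
proof (rule fls_eqI)
  fix n :: int
  have "(3 dvd n \<and> n div 3 = 1) \<longleftrightarrow> n = 3" by auto
  thus "(fls_X :: 'a fls) ^ 3 $$ n = fls_compose_power fls_X 3 $$ n"
    unfolding cp3_nth fls_X_power_nth fls_X_nth by (auto split: if_splits)
qed

locale thm5 =
  fixes a :: "'k::field fls" and \<iota> :: "'k fls \<Rightarrow> 'b::field" and \<alpha> :: 'b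
  assumes k_alg_closed: "alg_closed_type TYPE('k)"
    and k_char: "CHAR('k) = 2"
    and \<Omega>_alg_closed: "alg_closed_type TYPE('b)"
    and \<iota>_hom: "hom_on UNIV \<iota>"
    and a_nz: "a \<noteq> 0"
    and a_std: "standard_form a"
    and \<alpha>_root: "\<alpha>\<^sup>2 - \<alpha> = \<iota> a"
begin

definition "Kp = \<iota> ` range (\<lambda>f. fls_compose_power f 3)"
definition "Lp = range \<iota>"
definition "T = \<iota> fls_X"
definition "zeta = (SOME z::'k. z^2 + z + 1 = 0)"
definition "z = \<iota> (fls_const zeta)"
definition "ph j x = \<iota> (rot (zeta ^ j) (inv_into UNIV \<iota> x))"
definition "cc j = \<iota> (rot (zeta ^ j) a)"

lemma k2: "(2::'k) = 0"
  using of_nat_CHAR[where 'a='k] k_char by simp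

lemma zeta: "zeta^2 + zeta + 1 = 0"
proof -
  have "degree [:1, 1, 1::'k:] > 0" by simp
  then obtain x where "poly [:1, 1, 1::'k:] x = 0"
    using k_alg_closed unfolding alg_closed_type_def by blast
  hence "x^2 + x + 1 = 0" by (simp add: algebra_simps power2_eq_square)
  thus ?thesis unfolding zeta_def by (rule someI)
qed

lemma zeta3: "zeta ^ 3 = 1"
proof -
  have "zeta ^ 3 - 1 = (zeta - 1) * (zeta^2 + zeta + 1)"
    by (simp add: algebra_simps power2_eq_square power3_eq_cube)
  thus ?thesis using zeta by simp
qed

lemma zeta_nz: "zeta \<noteq> 0" using zeta3 by auto

lemma zeta_ne1: "zeta \<noteq> 1"
proof
  assume "zeta = 1"
  hence h3: "(3::'k) = 0" using zeta by simp
  have "(1::'k) = 3 - 2" by simp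
  also have "\<dots> = 0" using h3 k2 by simp
  finally show False by simp
qed

lemma I: "fhom UNIV \<iota>"
  unfolding fhom_def using \<iota>_hom subfield_UNIV by simp

sublocale I: fhom UNIV \<iota> by (rule I)

lemma \<iota>_inj: "inj \<iota>" using I.inj by simp

lemma \<iota>_add: "\<iota> (f + g) = \<iota> f + \<iota> g" by (simp add: I.add)
lemma \<iota>_mult: "\<iota> (f * g) = \<iota> f * \<iota> g" by (simp add: I.mult)
lemma \<iota>_diff: "\<iota> (f - g) = \<iota> f - \<iota> g" by (simp add: I.diff)
lemma \<iota>_uminus: "\<iota> (- f) = - \<iota> f" by (simp add: I.uminus)
lemma \<iota>_power: "\<iota> (f ^ n) = \<iota> f ^ n" by (simp add: I.power)
lemmas \<iota>_simps = \<iota>_add \<iota>_mult \<iota>_diff \<iota>_uminus \<iota>_power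

lemma b2: "(2::'b) = 0"
proof -
  have "(2 :: 'k fls) = fls_const 2" by (simp add: fls_eq_iff)
  hence "(2 :: 'k fls) = 0" using k2 by simp
  have "\<iota> ((1::'k fls) + 1) = 1 + 1" by (simp only: \<iota>_add I.one)
  hence "\<iota> (2::'k fls) = 1 + 1" by (simp only: one_add_one)
  hence "(0::'b) = 1 + 1" using \<open>(2 :: 'k fls) = 0\<close> by (simp only: I.zero)
  thus ?thesis by simp
qed

lemma z_eq: "z^2 + z + 1 = 0"
proof -
  have "\<iota> (fls_const (zeta^2 + zeta + 1)) = 0" using zeta by simp
  moreover have "fls_const (zeta^2 + zeta + 1) = fls_const zeta * fls_const zeta + fls_const zeta + 1"
    by (simp add: fls_eq_iff power2_eq_square)
  ultimately have "\<iota> (fls_const zeta) * \<iota> (fls_const zeta) + \<iota> (fls_const zeta) + 1 = 0"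
    by (simp only: \<iota>_add \<iota>_mult I.one)
  thus ?thesis unfolding z_def by (simp add: power2_eq_square)
qed

lemma z_pow: "\<iota> (fls_const (zeta ^ j)) = z ^ j"
  unfolding z_def by (simp add: fls_const_power \<iota>_power)

lemma Lp_sub: "is_subfield Lp"
  unfolding Lp_def using I.image_subfield by simp

lemma Kp_Lp: "Kp \<subseteq> Lp" unfolding Kp_def Lp_def by auto

lemma T_Lp: "T \<in> Lp" unfolding T_def Lp_def by simp

lemma T_nz: "T \<noteq> 0"
  unfolding T_def using I.nonzero by simp

lemma T3_Kp: "T ^ 3 \<in> Kp"
proof -
  have "T ^ 3 = \<iota> (fls_compose_power fls_X 3)" unfolding T_def by (simp add: \<iota>_power[symmetric] X3_cp)
  thus ?thesis unfolding Kp_def by blast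
qed

lemma inv_\<iota> [simp]: "inv_into UNIV \<iota> (\<iota> f) = f" using \<iota>_inj by simp

lemma ph_\<iota> [simp]: "ph j (\<iota> f) = \<iota> (rot (zeta ^ j) f)" unfolding ph_def by simp

lemma zetaj_nz: "zeta ^ j \<noteq> 0" using zeta_nz by simp

lemma zetaj3: "(zeta ^ j) ^ 3 = 1"
proof -
  have "(zeta ^ j) ^ 3 = (zeta ^ 3) ^ j" unfolding power_mult[symmetric] by (metis mult.commute)
  thus ?thesis using zeta3 by simp
qed

lemma ph_fhom: "fhom Lp (ph j)"
  unfolding fhom_def hom_on_def
proof (intro conjI ballI Lp_sub)
  show "ph j 1 = 1" using ph_\<iota>[of j 1] by (simp add: rot_one)
  fix x y assume "x \<in> Lp" "y \<in> Lp"
  then obtain f g where fg: "x = \<iota> f" "y = \<iota> g" unfolding Lp_def by auto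
  have "ph j (x + y) = ph j (\<iota> (f + g))" using fg by (simp only: \<iota>_add)
  also have "\<dots> = \<iota> (rot (zeta ^ j) f) + \<iota> (rot (zeta ^ j) g)" by (subst ph_\<iota>) (simp only: rot_add \<iota>_add)
  finally show "ph j (x + y) = ph j x + ph j y" using fg by simp
  have "ph j (x * y) = ph j (\<iota> (f * g))" using fg by (simp only: \<iota>_mult)
  also have "\<dots> = \<iota> (rot (zeta ^ j) f) * \<iota> (rot (zeta ^ j) g)"
    by (subst ph_\<iota>) (simp only: rot_mult[OF zetaj_nz] \<iota>_mult)
  finally show "ph j (x * y) = ph j x * ph j y" using fg by simp
qed

lemma ph_fix: "x \<in> Kp \<Longrightarrow> ph j x = x"
proof -
  assume "x \<in> Kp"
  then obtain g where "x = \<iota> (fls_compose_power g 3)" unfolding Kp_def by auto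
  thus ?thesis by (simp add: rot_compose3[OF zetaj3])
qed

lemma ph_Lp: "x \<in> Lp \<Longrightarrow> ph j x \<in> Lp" unfolding Lp_def by auto

lemma ph_surj: "x \<in> Lp \<Longrightarrow> \<exists>y\<in>Lp. ph j y = x"
proof -
  assume "x \<in> Lp"
  then obtain f where f: "x = \<iota> f" unfolding Lp_def by auto
  have "zeta ^ j * zeta ^ (2 * j) = zeta ^ (j + 2 * j)" unfolding power_add ..
  also have "j + 2 * j = j * 3" by simp
  also have "zeta ^ (j * 3) = (zeta ^ j) ^ 3" by (simp add: power_mult)
  finally have "zeta ^ j * zeta ^ (2 * j) = (zeta ^ j) ^ 3" .
  hence "zeta ^ j * zeta ^ (2 * j) = 1" using zetaj3 by simp
  hence "rot (zeta ^ j) (rot (zeta ^ (2 * j)) f) = f" by (simp add: rot_rot rot_1)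
  hence "ph j (\<iota> (rot (zeta ^ (2 * j)) f)) = x" using f by simp
  thus ?thesis unfolding Lp_def by blast
qed

lemma ph_image: "ph j ` Lp = Lp"
proof
  show "ph j ` Lp \<subseteq> Lp" using ph_Lp by auto
  show "Lp \<subseteq> ph j ` Lp"
  proof
    fix x assume "x \<in> Lp"
    then obtain y where "y \<in> Lp" "ph j y = x" using ph_surj by blast
    thus "x \<in> ph j ` Lp" by (simp add: rev_image_eqI)
  qed
qed

end


context thm5 begin

lemma cp_Kp: "\<iota> (fls_compose_power g 3) \<in> Kp" unfolding Kp_def by blast

lemma decomp_\<iota>:
  "\<iota> f = \<iota> (fls_compose_power (part f 0) 3) + T * \<iota> (fls_compose_power (part f 1) 3)
        + T^2 * \<iota> (fls_compose_power (part f 2) 3)"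
proof -
  have "\<iota> f = \<iota> (fls_compose_power (part f 0) 3 + fls_X * fls_compose_power (part f 1) 3
             + fls_X ^ 2 * fls_compose_power (part f 2) 3)"
    using decomp3[of f] by simp
  thus ?thesis unfolding T_def by (simp only: \<iota>_add \<iota>_mult \<iota>_power)
qed

lemma emb_decomp:
  assumes "fhom E \<tau>" "Lp \<subseteq> E" "\<forall>x\<in>Kp. \<tau> x = x"
  shows "\<tau> (\<iota> f) = \<iota> (fls_compose_power (part f 0) 3) + \<tau> T * \<iota> (fls_compose_power (part f 1) 3)
        + (\<tau> T)^2 * \<iota> (fls_compose_power (part f 2) 3)"
proof -
  interpret t: fhom E \<tau> by fact
  define p0 where "p0 = \<iota> (fls_compose_power (part f 0) 3)"
  define p1 where "p1 = \<iota> (fls_compose_power (part f 1) 3)"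
  define p2 where "p2 = \<iota> (fls_compose_power (part f 2) 3)"
  have K: "p0 \<in> Kp" "p1 \<in> Kp" "p2 \<in> Kp" unfolding p0_def p1_def p2_def by (auto intro: cp_Kp)
  hence E: "p0 \<in> E" "p1 \<in> E" "p2 \<in> E" "T \<in> E" using Kp_Lp assms(2) T_Lp by auto
  have sub: "is_subfield E" by (rule t.sub)
  have "\<tau> (\<iota> f) = \<tau> (p0 + T * p1 + T^2 * p2)" using decomp_\<iota>[of f] unfolding p0_def p1_def p2_def by simp
  also have "\<dots> = \<tau> p0 + \<tau> T * \<tau> p1 + (\<tau> T)^2 * \<tau> p2"
    using E sub by (simp add: t.add t.mult t.power subfield_add subfield_mult subfield_power)
  also have "\<dots> = p0 + \<tau> T * p1 + (\<tau> T)^2 * p2" using K assms(3) by simp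
  finally show ?thesis unfolding p0_def p1_def p2_def .
qed

lemma cube_factor:
  fixes x y :: 'b
  shows "(x - y) * (x - z * y) * (x - z^2 * y) = x^3 - y^3"
proof -
  have zz: "z^2 = - z - 1" using z_eq by (simp add: eq_neg_iff_add_eq_0 algebra_simps)
  have z3: "z^3 = 1"
  proof -
    have "z^3 = z * z^2" by (simp add: power3_eq_cube power2_eq_square)
    also have "\<dots> = z * (- z - 1)" using zz by simp
    also have "\<dots> = - (z^2) - z" by (simp add: algebra_simps power2_eq_square)
    also have "\<dots> = 1" using zz by simp
    finally show ?thesis .
  qed
  have e: "(x - y) * (x - z * y) * (x - z^2 * y) =
        x^3 - (1 + z + z^2) * x^2 * y + (z + z^2 + z^3) * x * y^2 - z^3 * y^3"
    by (simp add: algebra_simps power2_eq_square power3_eq_cube)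
  have s1: "1 + z + z^2 = 0" using z_eq by (simp add: algebra_simps)
  have s2: "z + z^2 + z^3 = 0"
  proof -
    have "z + z^2 + z^3 = z * (1 + z + z^2)" by (simp add: algebra_simps power2_eq_square power3_eq_cube)
    thus ?thesis using s1 by simp
  qed
  have "x^3 - (1 + z + z^2) * x^2 * y + (z + z^2 + z^3) * x * y^2 - z^3 * y^3 = x^3 - y^3"
    unfolding s1 s2 unfolding z3 by simp
  with e show ?thesis by simp
qed

lemma emb_T:
  assumes "fhom E \<tau>" "Lp \<subseteq> E" "\<forall>x\<in>Kp. \<tau> x = x"
  shows "\<exists>j<3. \<tau> T = z^j * T"
proof -
  interpret t: fhom E \<tau> by fact
  have "T \<in> E" using T_Lp assms(2) by auto
  hence "(\<tau> T)^3 = \<tau> (T^3)" by (simp add: t.power)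
  also have "\<dots> = T^3" using T3_Kp assms(3) by simp
  finally have "(\<tau> T - T) * (\<tau> T - z * T) * (\<tau> T - z^2 * T) = 0" using cube_factor by simp
  hence "\<tau> T = z^0 * T \<or> \<tau> T = z^1 * T \<or> \<tau> T = z^2 * T" by auto
  thus ?thesis
  proof (elim disjE)
    assume "\<tau> T = z^0 * T" thus ?thesis by (intro exI[of _ 0]) simp
  next
    assume "\<tau> T = z^1 * T" thus ?thesis by (intro exI[of _ 1]) simp
  next
    assume "\<tau> T = z^2 * T" thus ?thesis by (intro exI[of _ 2]) simp
  qed
qed

lemma rot_decomp_\<iota>:
  "\<iota> (rot (zeta^j) f) = \<iota> (fls_compose_power (part f 0) 3) + (z^j * T) * \<iota> (fls_compose_power (part f 1) 3)
        + (z^j * T)^2 * \<iota> (fls_compose_power (part f 2) 3)"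
proof -
  have r: "rot (zeta^j) f = fls_compose_power (part f 0) 3 + (fls_const (zeta^j) * fls_X) * fls_compose_power (part f 1) 3
             + (fls_const (zeta^j) * fls_X) ^ 2 * fls_compose_power (part f 2) 3"
    apply (subst decomp3[of f])
    by (simp only: rot_add rot_mult[OF zetaj_nz] rot_power[OF zetaj_nz] rot_X rot_compose3[OF zetaj3])
  show ?thesis unfolding r T_def z_pow[symmetric] by (simp only: \<iota>_add \<iota>_mult \<iota>_power)
qed

lemma emb_L:
  assumes "fhom E \<tau>" "Lp \<subseteq> E" "\<forall>x\<in>Kp. \<tau> x = x"
  shows "\<exists>j<3. \<tau> T = z^j * T \<and> (\<forall>f. \<tau> (\<iota> f) = \<iota> (rot (zeta^j) f))"
proof -
  obtain j where j: "j < 3" "\<tau> T = z^j * T" using emb_T[OF assms] by blast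
  have "\<tau> (\<iota> f) = \<iota> (rot (zeta^j) f)" for f
    unfolding emb_decomp[OF assms] rot_decomp_\<iota> j(2) ..
  thus ?thesis using j by blast
qed

lemma emb_L':
  assumes "fhom E \<tau>" "Lp \<subseteq> E" "\<forall>x\<in>Kp. \<tau> x = x"
  shows "\<exists>j<3. \<tau> T = z^j * T \<and> (\<forall>x\<in>Lp. \<tau> x = ph j x)"
  using emb_L[OF assms] unfolding Lp_def by auto

lemma emb_agree:
  assumes "fhom E \<tau>" "fhom E' \<sigma>" "Lp \<subseteq> E" "Lp \<subseteq> E'" "\<forall>x\<in>Kp. \<tau> x = x" "\<forall>x\<in>Kp. \<sigma> x = x"
    and "\<tau> T = \<sigma> T" and "x \<in> Lp"
  shows "\<tau> x = \<sigma> x"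
proof -
  obtain f where "x = \<iota> f" using assms(8) unfolding Lp_def by auto
  thus ?thesis using emb_decomp[OF assms(1,3,5)] emb_decomp[OF assms(2,4,6)] assms(7) by simp
qed

lemma zpow_T_inj:
  assumes "i < 3" "j < 3" "z^i * T = z^j * T"
  shows "i = j"
proof -
  have zz: "z^2 = - z - 1" using z_eq by (simp add: eq_neg_iff_add_eq_0 algebra_simps)
  have z1: "z \<noteq> 1"
  proof
    assume "z = 1" hence h3: "(3::'b) = 0" using z_eq by simp
    have "(1::'b) = 3 - 2" by simp
    also have "\<dots> = 0" using h3 b2 by simp
    finally show False by simp
  qed
  have z0: "z \<noteq> 0" using z_eq by auto
  have z2: "z^2 \<noteq> 1"
  proof
    assume "z^2 = 1" hence "- z = (2::'b)" using zz by (simp add: algebra_simps)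
    hence "z = 0" using b2 by simp
    thus False using z0 by simp
  qed
  have z21: "z^2 \<noteq> z" using z0 z1 by (simp add: power2_eq_square)
  have "z^i = z^j" using assms(3) T_nz by simp
  thus ?thesis using assms(1,2) z1 z2 z21
    by (auto simp: less_Suc_eq numeral_3_eq_3 numeral_2_eq_2)
qed

end


context thm5 begin

definition "Fd = gen_field (insert \<alpha> Lp)"

lemma notAS_Lp:
  assumes "standard_form b" "b \<noteq> 0" "y \<in> Lp"
  shows "y^2 - y \<noteq> \<iota> b"
proof
  assume h: "y^2 - y = \<iota> b"
  obtain y0 where y0: "y = \<iota> y0" using assms(3) unfolding Lp_def by auto
  have "\<iota> (y0^2 - y0) = \<iota> b" using h y0 by (simp add: \<iota>_diff \<iota>_power)
  hence "y0^2 - y0 = b" using \<iota>_inj by (simp add: inj_eq)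
  thus False using AS_fls[OF assms(1,2)] by blast
qed

lemma alpha_notin: "\<alpha> \<notin> Lp"
  using notAS_Lp[OF a_std a_nz] \<alpha>_root by blast

lemma aLp: "\<iota> a \<in> Lp" unfolding Lp_def by simp

lemma alpha_eq: "\<alpha>^2 = \<alpha> + \<iota> a"
  using \<alpha>_root by (simp add: algebra_simps)

lemma AS0: "ASext Lp \<alpha> (\<iota> a)"
  unfolding ASext_def using b2 Lp_sub alpha_notin aLp alpha_eq by simp

lemma cc_Lp: "cc j \<in> Lp" unfolding cc_def Lp_def by simp

lemma zeta_mod: "zeta ^ j = zeta ^ (j mod 3)"
proof -
  have "zeta ^ j = zeta ^ (3 * (j div 3) + j mod 3)" by simp
  also have "\<dots> = (zeta ^ 3) ^ (j div 3) * zeta ^ (j mod 3)" by (simp only: power_add power_mult)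
  finally show ?thesis using zeta3 by simp
qed

lemma cc_mod: "cc j = cc (j mod 3)"
  unfolding cc_def using zeta_mod by metis

lemma ph_cc: "ph j (cc i) = cc (i + j)"
  unfolding cc_def by (simp add: rot_rot power_add mult.commute)

lemma cc0: "cc 0 = \<iota> a" unfolding cc_def by (simp add: rot_1)

lemma ph_a: "ph j (\<iota> a) = cc j" unfolding cc_def by simp

lemma Fd_sub: "is_subfield Fd" unfolding Fd_def by (rule gen_field_subfield)

lemma Lp_Fd: "Lp \<subseteq> Fd" unfolding Fd_def using gen_field_subset by blast

lemma alpha_Fd: "\<alpha> \<in> Fd" unfolding Fd_def using gen_field_subset by blast

lemma ext_emb:
  assumes g: "g^2 - g = cc j"
  shows "\<exists>\<psi>. fhom Fd \<psi> \<and> (\<forall>x\<in>Lp. \<psi> x = ph j x) \<and> \<psi> \<alpha> = g"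
proof -
  interpret A: ASext Lp \<alpha> "\<iota> a" by (rule AS0)
  have "g^2 = g + ph j (\<iota> a)" using g ph_a[of j] by (simp add: algebra_simps)
  from A.extend[OF ph_fhom this] show ?thesis unfolding Fd_def by blast
qed

lemma emb_fhom: "\<tau> \<in> embeddings_over Kp Fd \<Longrightarrow> fhom Fd \<tau>"
  unfolding embeddings_over_def fhom_def using Fd_sub by simp

lemma emb_fix: "\<tau> \<in> embeddings_over Kp Fd \<Longrightarrow> \<forall>x\<in>Kp. \<tau> x = x"
  unfolding embeddings_over_def by simp

lemma closure:
  assumes b1: "b1^2 - b1 = cc 1" and b2': "b2^2 - b2 = cc 2"
  shows "galois_closure Kp Fd = gen_field (Lp \<union> {\<alpha>, b1, b2})"
proof
  define N' where "N' = gen_field (Lp \<union> {\<alpha>, b1, b2})"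
  have N'sub: "is_subfield N'" unfolding N'_def by (rule gen_field_subfield)
  have LpN': "Lp \<subseteq> N'" "\<alpha> \<in> N'" "b1 \<in> N'" "b2 \<in> N'"
    unfolding N'_def using gen_field_subset[of "Lp \<union> {\<alpha>, b1, b2}"] by auto
  show "galois_closure Kp Fd \<subseteq> N'"
    unfolding galois_closure_def
  proof (rule gen_field_min[OF N'sub], safe)
    fix \<tau> x assume t: "\<tau> \<in> embeddings_over Kp Fd" and x: "x \<in> Fd"
    interpret t: fhom Fd \<tau> using emb_fhom[OF t] .
    obtain j where j: "j < 3" "\<forall>y\<in>Lp. \<tau> y = ph j y"
      using emb_L'[OF emb_fhom[OF t] Lp_Fd emb_fix[OF t]] by blast
    have "(\<tau> \<alpha>)^2 - \<tau> \<alpha> = \<tau> (\<alpha>^2 - \<alpha>)" using alpha_Fd Fd_sub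
      by (simp add: t.diff t.power subfield_power)
    also have "\<dots> = cc j" using \<alpha>_root j(2) aLp ph_a by simp
    finally have ta: "(\<tau> \<alpha>)^2 - \<tau> \<alpha> = cc j" .
    have "\<tau> \<alpha> \<in> N'"
    proof -
      have "\<exists>bj. bj \<in> N' \<and> bj^2 - bj = cc j"
      proof -
        consider "j = 0" | "j = 1" | "j = 2" using j(1) by linarith
        thus ?thesis
        proof cases
          case 1 thus ?thesis using LpN'(2) \<alpha>_root cc0 by (intro exI[of _ \<alpha>]) simp
        next
          case 2 thus ?thesis using LpN'(3) b1 by (intro exI[of _ b1]) simp
        next
          case 3 thus ?thesis using LpN'(4) b2' by (intro exI[of _ b2]) simp
        qed
      qed
      then obtain bj where bj: "bj \<in> N'" "bj^2 - bj = cc j" by blast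
      have "\<tau> \<alpha> = bj \<or> \<tau> \<alpha> = bj + 1" using roots_AS[OF b2, of "\<tau> \<alpha>" bj] ta bj(2) by simp
      thus ?thesis
      proof
        assume "\<tau> \<alpha> = bj" thus ?thesis using bj(1) by simp
      next
        assume "\<tau> \<alpha> = bj + 1" thus ?thesis using subfield_add[OF N'sub bj(1) subfield_1[OF N'sub]] by simp
      qed
    qed
    moreover have "\<tau> ` Lp \<subseteq> N'" using j(2) ph_Lp LpN' by auto
    ultimately have "\<tau> ` insert \<alpha> Lp \<subseteq> N'" by auto
    hence "gen_field (\<tau> ` insert \<alpha> Lp) \<subseteq> N'" by (rule gen_field_min[OF N'sub])
    moreover have "\<tau> ` Fd = gen_field (\<tau> ` insert \<alpha> Lp)"
      unfolding Fd_def by (rule fhom_gen_image) (use emb_fhom[OF t] in \<open>simp add: Fd_def\<close>)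
    ultimately show "\<tau> x \<in> N'" using x by auto
  qed
  have emb_sub: "\<psi> ` Fd \<subseteq> galois_closure Kp Fd" if "\<psi> \<in> embeddings_over Kp Fd" for \<psi>
  proof -
    have "\<psi> ` Fd \<subseteq> (\<Union>\<tau>\<in>embeddings_over Kp Fd. \<tau> ` Fd)" using that by (rule UN_upper)
    thus ?thesis unfolding galois_closure_def using gen_field_subset by (rule order_trans)
  qed
  have inemb: "\<psi> \<in> embeddings_over Kp Fd" if "fhom Fd \<psi>" "\<forall>x\<in>Lp. \<psi> x = ph j x" for \<psi> j
  proof -
    have "hom_on Fd \<psi>" using that(1) by (simp add: fhom_def)
    moreover have "\<forall>x\<in>Kp. \<psi> x = x"
    proof
      fix x assume "x \<in> Kp"
      hence "x \<in> Lp" using Kp_Lp by blast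
      thus "\<psi> x = x" using that(2) ph_fix[OF \<open>x \<in> Kp\<close>] by simp
    qed
    ultimately show ?thesis unfolding embeddings_over_def by simp
  qed
  have "id \<in> embeddings_over Kp Fd" unfolding embeddings_over_def hom_on_def by simp
  hence s1: "Fd \<subseteq> galois_closure Kp Fd" using emb_sub[of id] by simp
  obtain \<psi>1 where p1: "fhom Fd \<psi>1" "\<forall>x\<in>Lp. \<psi>1 x = ph 1 x" "\<psi>1 \<alpha> = b1" using ext_emb[OF b1] by blast
  obtain \<psi>2 where p2: "fhom Fd \<psi>2" "\<forall>x\<in>Lp. \<psi>2 x = ph 2 x" "\<psi>2 \<alpha> = b2" using ext_emb[OF b2'] by blast
  have "b1 \<in> galois_closure Kp Fd" using emb_sub[OF inemb[OF p1(1,2)]] p1(3) alpha_Fd by blast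
  moreover have "b2 \<in> galois_closure Kp Fd" using emb_sub[OF inemb[OF p2(1,2)]] p2(3) alpha_Fd by blast
  ultimately have "Lp \<union> {\<alpha>, b1, b2} \<subseteq> galois_closure Kp Fd" using s1 Lp_Fd alpha_Fd by auto
  thus "N' \<subseteq> galois_closure Kp Fd" unfolding N'_def galois_closure_def
    by (rule gen_field_min[OF gen_field_subfield])
qed

end


context thm5 begin

lemma root_shift:
  assumes "x^2 - x = c" "e = 0 \<or> e = 1"
  shows "(x + e)^2 - (x + e) = (c::'b)"
  using assms b2 by (auto simp: power2_sum algebra_simps)

lemma ext_step:
  assumes E: "is_subfield E" "Lp \<subseteq> E" and b: "b \<notin> E" "b^2 - b = cc i"
    and psi: "fhom E \<psi>" "\<forall>x\<in>Lp. \<psi> x = ph j x" and g: "g^2 - g = cc (i + j)"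
  shows "\<exists>\<psi>'. fhom (gen_field (insert b E)) \<psi>' \<and> (\<forall>x\<in>E. \<psi>' x = \<psi> x) \<and> \<psi>' b = g"
proof -
  have ccE: "cc i \<in> E" using cc_Lp E(2) by blast
  have "ASext E b (cc i)"
    unfolding ASext_def using b2 E(1) b ccE by (simp add: algebra_simps)
  then interpret A: ASext E b "cc i" .
  have "\<psi> (cc i) = cc (i + j)" using psi(2) cc_Lp ph_cc by simp
  hence "g^2 = g + \<psi> (cc i)" using g by (simp add: algebra_simps)
  thus ?thesis using A.extend[OF psi(1)] by blast
qed

end

locale thm5b = thm5 +
  fixes b1 b2 :: 'b
  assumes b1_root: "b1^2 - b1 = cc 1" and b2_root: "b2^2 - b2 = cc 2"
begin

definition "B (i::nat) = (if i mod 3 = 0 then \<alpha> else if i mod 3 = 1 then b1 else b2)"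
definition "N = gen_field (Lp \<union> {\<alpha>, b1, b2})"
definition "G = galois_group Kp N"
definition "E2 = gen_field (insert b1 Fd)"

lemma N_closure: "galois_closure Kp Fd = N"
  unfolding N_def by (rule closure[OF b1_root b2_root])

lemma N_sub: "is_subfield N" unfolding N_def by (rule gen_field_subfield)

lemma S_N: "Lp \<union> {\<alpha>, b1, b2} \<subseteq> N" unfolding N_def by (rule gen_field_subset)

lemma Lp_N: "Lp \<subseteq> N" using S_N by blast

lemma B_mod: "B i = B (i mod 3)" unfolding B_def by simp

lemma B_cases: "B i = \<alpha> \<or> B i = b1 \<or> B i = b2" unfolding B_def by auto

lemma B_N: "B i \<in> N" using B_cases[of i] S_N by auto

lemma B_S: "B i \<in> Lp \<union> {\<alpha>, b1, b2}" using B_cases[of i] by auto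

lemma B012: "B 0 = \<alpha>" "B 1 = b1" "B 2 = b2" unfolding B_def by auto

lemma B_root: "(B i)^2 - B i = cc i"
proof -
  have cm: "cc i = cc (i mod 3)" by (rule cc_mod)
  consider "i mod 3 = 0" | "i mod 3 = 1" | "i mod 3 = 2" by linarith
  thus ?thesis
  proof cases
    case 1
    hence "B i = \<alpha>" "cc i = cc 0" using cm unfolding B_def by simp_all
    thus ?thesis using \<alpha>_root cc0 by simp
  next
    case 2
    hence "B i = b1" "cc i = cc 1" using cm unfolding B_def by simp_all
    thus ?thesis using b1_root by simp
  next
    case 3
    hence "B i = b2" "cc i = cc 2" using cm unfolding B_def by simp_all
    thus ?thesis using b2_root by simp
  qed
qed

lemma N_E3: "N = gen_field (insert b2 E2)"
proof -
  have "gen_field (insert b2 E2) = gen_field (insert b2 (insert b1 Fd))"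
    unfolding E2_def by (rule gen_field_insert_gen)
  also have "insert b2 (insert b1 Fd) = {b2, b1} \<union> gen_field (insert \<alpha> Lp)" unfolding Fd_def by simp
  finally have "gen_field (insert b2 E2) = gen_field ({b2, b1} \<union> gen_field (insert \<alpha> Lp))" .
  also have "\<dots> = gen_field ({b2, b1} \<union> insert \<alpha> Lp)" by (rule gen_field_union_gen)
  also have "{b2, b1} \<union> insert \<alpha> Lp = Lp \<union> {\<alpha>, b1, b2}" by auto
  finally show ?thesis unfolding N_def by simp
qed

lemma E2_eq: "E2 = gen_field (Lp \<union> {\<alpha>, b1})"
proof -
  have "E2 = gen_field ({b1} \<union> gen_field (insert \<alpha> Lp))" unfolding E2_def Fd_def by simp
  also have "\<dots> = gen_field ({b1} \<union> insert \<alpha> Lp)" by (rule gen_field_union_gen)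
  also have "{b1} \<union> insert \<alpha> Lp = Lp \<union> {\<alpha>, b1}" by auto
  finally show ?thesis .
qed

lemma E2_sub: "is_subfield E2" unfolding E2_def by (rule gen_field_subfield)
lemma Fd_E2: "Fd \<subseteq> E2" unfolding E2_def using gen_field_subset by blast
lemma b1_E2: "b1 \<in> E2" unfolding E2_def using gen_field_subset by blast

lemma G_carrier: "g \<in> carrier G \<longleftrightarrow>
    hom_on N g \<and> bij_betw g N N \<and> (\<forall>x\<in>Kp. g x = x) \<and> (\<forall>x. x \<notin> N \<longrightarrow> g x = x)"
  unfolding G_def galois_group_def by simp

lemma G_fhom: "g \<in> carrier G \<Longrightarrow> fhom N g"
  unfolding fhom_def G_carrier using N_sub by simp

lemma G_struct:
  assumes g: "g \<in> carrier G"
  shows "\<exists>j<3. g T = z^j * T \<and> (\<forall>x\<in>Lp. g x = ph j x) \<and> (\<forall>i. g (B i) = B (i + j) \<or> g (B i) = B (i + j) + 1)"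
proof -
  interpret t: fhom N g using G_fhom[OF g] .
  have fx: "\<forall>x\<in>Kp. g x = x" using g G_carrier by blast
  obtain j where j: "j < 3" "g T = z^j * T" "\<forall>x\<in>Lp. g x = ph j x"
    using emb_L'[OF G_fhom[OF g] Lp_N fx] by blast
  have "g (B i) = B (i + j) \<or> g (B i) = B (i + j) + 1" for i
  proof -
    have "(g (B i))^2 - g (B i) = g ((B i)^2 - B i)" using B_N N_sub
      by (simp add: t.diff t.power subfield_power)
    also have "\<dots> = cc (i + j)" using B_root j(3) cc_Lp ph_cc by simp
    finally show ?thesis using roots_AS[OF b2] B_root[of "i + j"] by simp
  qed
  thus ?thesis using j by blast
qed

lemma G_determined:
  assumes g: "g \<in> carrier G" and h: "h \<in> carrier G" and T: "g T = h T"
    and S: "g \<alpha> = h \<alpha>" "g b1 = h b1" "g b2 = h b2"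
  shows "g = h"
proof
  fix x
  show "g x = h x"
  proof (cases "x \<in> N")
    case False thus ?thesis using g h G_carrier by auto
  next
    case True
    have fixg: "\<forall>x\<in>Kp. g x = x" and fixh: "\<forall>x\<in>Kp. h x = x" using g h G_carrier by auto
    have fg: "fhom (gen_field (Lp \<union> {\<alpha>, b1, b2})) g" using G_fhom[OF g] unfolding N_def .
    have fh: "fhom (gen_field (Lp \<union> {\<alpha>, b1, b2})) h" using G_fhom[OF h] unfolding N_def .
    have xin: "x \<in> gen_field (Lp \<union> {\<alpha>, b1, b2})" using True unfolding N_def .
    have agree: "g y = h y" if y: "y \<in> Lp \<union> {\<alpha>, b1, b2}" for y
    proof (cases "y \<in> Lp")
      case True
      thus ?thesis using emb_agree[OF G_fhom[OF g] G_fhom[OF h] Lp_N Lp_N fixg fixh T] by blast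
    next
      case False thus ?thesis using y S by auto
    qed
    show ?thesis using fhom_agree[OF fg fh agree xin] .
  qed
qed

lemma mk_aut:
  assumes psi: "fhom N \<psi>" "\<forall>x\<in>Lp. \<psi> x = ph j x"
    and B: "\<forall>i. \<psi> (B i) = B (i + j) \<or> \<psi> (B i) = B (i + j) + 1"
  shows "(\<lambda>x. if x \<in> N then \<psi> x else x) \<in> carrier G"
proof -
  interpret p: fhom N \<psi> by fact
  define g where "g = (\<lambda>x. if x \<in> N then \<psi> x else x)"
  have hom: "hom_on N g" unfolding hom_on_def g_def
    using N_sub by (simp add: subfield_1 subfield_add subfield_mult p.add p.mult)
  have inj: "inj_on g N" using p.inj unfolding g_def inj_on_def by simp
  have psiS: "\<psi> ` (Lp \<union> {\<alpha>, b1, b2}) \<subseteq> N"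
  proof
    fix y assume "y \<in> \<psi> ` (Lp \<union> {\<alpha>, b1, b2})"
    then obtain x where x: "x \<in> Lp \<union> {\<alpha>, b1, b2}" "y = \<psi> x" by blast
    show "y \<in> N"
    proof (cases "x \<in> Lp")
      case True thus ?thesis using x psi(2) ph_Lp Lp_N by auto
    next
      case False
      hence "x = \<alpha> \<or> x = b1 \<or> x = b2" using x by auto
      hence "\<exists>i. x = B i" using B012 by metis
      then obtain i where i: "x = B i" by blast
      have "\<psi> x = B (i + j) \<or> \<psi> x = B (i + j) + 1" using B i by simp
      thus ?thesis
      proof
        assume "\<psi> x = B (i + j)" thus ?thesis using x(2) B_N by simp
      next
        assume "\<psi> x = B (i + j) + 1"
        thus ?thesis using x(2) subfield_add[OF N_sub B_N subfield_1[OF N_sub]] by simp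
      qed
    qed
  qed
  have "\<psi> ` N = gen_field (\<psi> ` (Lp \<union> {\<alpha>, b1, b2}))"
    unfolding N_def by (rule fhom_gen_image) (use psi(1) in \<open>simp add: N_def\<close>)
  also have "\<dots> = N"
  proof
    show "gen_field (\<psi> ` (Lp \<union> {\<alpha>, b1, b2})) \<subseteq> N" using psiS by (rule gen_field_min[OF N_sub])
    define H where "H = gen_field (\<psi> ` (Lp \<union> {\<alpha>, b1, b2}))"
    have Hsub: "is_subfield H" unfolding H_def by (rule gen_field_subfield)
    have HS: "\<psi> ` (Lp \<union> {\<alpha>, b1, b2}) \<subseteq> H" unfolding H_def by (rule gen_field_subset)
    have "Lp \<subseteq> H"
    proof
      fix x assume "x \<in> Lp"
      then obtain y where "y \<in> Lp" "ph j y = x" using ph_surj by blast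
      thus "x \<in> H" using HS psi(2) by force
    qed
    moreover have "B k \<in> H" for k
    proof -
      have "(k + 2 * j + j) mod 3 = k mod 3" by presburger
      hence BB: "B (k + 2 * j + j) = B k" using B_mod[of "k + 2 * j + j"] B_mod[of k] by simp
      have in1: "\<psi> (B (k + 2 * j)) \<in> H" using HS B_S by blast
      have "\<psi> (B (k + 2 * j)) = B k \<or> \<psi> (B (k + 2 * j)) = B k + 1" using B[rule_format, of "k + 2 * j"] BB by simp
      thus ?thesis
      proof
        assume "\<psi> (B (k + 2 * j)) = B k" thus ?thesis using in1 by simp
      next
        assume "\<psi> (B (k + 2 * j)) = B k + 1"
        hence "B k = \<psi> (B (k + 2 * j)) - 1" by simp
        thus ?thesis using subfield_diff[OF Hsub in1 subfield_1[OF Hsub]] by simp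
      qed
    qed
    moreover have "\<alpha> \<in> H" "b1 \<in> H" "b2 \<in> H" using \<open>\<And>k. B k \<in> H\<close>[of 0] \<open>\<And>k. B k \<in> H\<close>[of 1]
        \<open>\<And>k. B k \<in> H\<close>[of 2] B012 by simp_all
    ultimately have "Lp \<union> {\<alpha>, b1, b2} \<subseteq> H" by blast
    thus "N \<subseteq> gen_field (\<psi> ` (Lp \<union> {\<alpha>, b1, b2}))" unfolding N_def H_def[symmetric]
      by (rule gen_field_min[OF Hsub])
  qed
  finally have "\<psi> ` N = N" .
  hence "g ` N = N" unfolding g_def by simp
  hence bij: "bij_betw g N N" using inj by (simp add: bij_betw_def)
  have fx: "\<forall>x\<in>Kp. g x = x" unfolding g_def using Kp_Lp Lp_N psi(2) ph_fix by auto
  have out: "\<forall>x. x \<notin> N \<longrightarrow> g x = x" unfolding g_def by simp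
  show ?thesis unfolding G_carrier g_def[symmetric] using hom bij fx out by blast
qed

end


context thm5 begin

definition "comb l0 l1 l2 = (if l0 then a else 0) + (if l1 then rot zeta a else 0) + (if l2 then rot (zeta^2) a else 0)"
definition "ccs l0 l1 l2 = (if l0 then cc 0 else 0) + (if l1 then cc 1 else 0) + (if l2 then cc 2 else 0)"

lemma ccs_comb: "ccs l0 l1 l2 = \<iota> (comb l0 l1 l2)"
  unfolding ccs_def comb_def cc_def by (simp add: \<iota>_add rot_1)

lemma comb_nth: "comb l0 l1 l2 $$ n =
   (of_bool l0 + of_bool l1 * zeta powi n + of_bool l2 * (zeta powi n)^2) * a $$ n"
  unfolding comb_def by (simp add: power_int_mult_distrib power2_eq_square algebra_simps)

lemma comb_std: "standard_form (comb l0 l1 l2)"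
  using a_std unfolding standard_form_def comb_nth by auto

lemma zeta_powi: "zeta powi n = zeta ^ nat (n mod 3)"
proof -
  have "zeta powi n = zeta powi (3 * (n div 3) + n mod 3)" by simp
  also have "\<dots> = zeta powi (3 * (n div 3)) * zeta powi (n mod 3)"
    by (rule power_int_add) (simp add: zeta_nz)
  also have "zeta powi (3 * (n div 3)) = (zeta powi 3) powi (n div 3)" by (rule power_int_mult)
  also have "zeta powi 3 = 1" using zeta3 by simp
  also have "zeta powi (n mod 3) = zeta ^ nat (n mod 3)"
    by (simp add: power_int_def)
  finally show ?thesis by simp
qed

lemma zeta_powi_cases:
  assumes "\<not> 3 dvd n"
  shows "(zeta powi n)^2 + zeta powi n + 1 = 0 \<and> zeta powi n \<noteq> 0 \<and> zeta powi n \<noteq> 1"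
proof -
  have "n mod 3 = 1 \<or> n mod 3 = 2" using assms by presburger
  thus ?thesis
  proof
    assume "n mod 3 = 1"
    hence "zeta powi n = zeta" using zeta_powi by simp
    thus ?thesis using zeta zeta_nz zeta_ne1 by simp
  next
    assume "n mod 3 = 2"
    hence u: "zeta powi n = zeta^2" using zeta_powi by simp
    have z2: "zeta^2 = zeta + 1"
    proof -
      have "zeta^2 = - zeta - 1" using zeta by (simp add: eq_neg_iff_add_eq_0 algebra_simps)
      thus ?thesis using c2_neg[OF k2] c2_minus[OF k2] by simp
    qed
    have "(zeta^2)^2 + zeta^2 + 1 = zeta * zeta^3 + zeta^2 + 1" by (simp add: power2_eq_square power3_eq_cube)
    also have "\<dots> = 0" using zeta3 zeta by (simp add: algebra_simps)
    finally have e: "(zeta^2)^2 + zeta^2 + 1 = 0" .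
    have "zeta^2 \<noteq> 1" using z2 zeta_nz by simp
    thus ?thesis using u e zeta_nz by simp
  qed
qed

lemma coef_nz:
  fixes u :: 'k
  assumes u: "u^2 + u + 1 = 0" "u \<noteq> 0" "u \<noteq> 1" and l: "\<not> (l0 = l1 \<and> l1 = l2)"
  shows "of_bool l0 + of_bool l1 * u + of_bool l2 * u^2 \<noteq> 0"
proof -
  have one: "(1::'k) + 1 = 0" using k2 by simp
  have u2: "u^2 = u + 1"
  proof -
    have "u^2 = - u - 1" using u(1) by (simp add: eq_neg_iff_add_eq_0 algebra_simps)
    thus ?thesis using c2_neg[OF k2] c2_minus[OF k2] by simp
  qed
  have u1: "u + 1 \<noteq> 0"
  proof
    assume "u + 1 = 0" hence "u = - 1" by (simp add: eq_neg_iff_add_eq_0)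
    thus False using u(3) c2_neg[OF k2] by simp
  qed
  have "u + (u + 1) = 1" using one by (simp add: algebra_simps)
  moreover have "1 + (u + 1) = u" using one by (simp add: algebra_simps)
  moreover have "1 + u \<noteq> 0" using u1 by (simp add: add.commute)
  ultimately show ?thesis using l u(2,3) u1 u2 by (cases l0; cases l1; cases l2) simp_all
qed

lemma comb_nz1:
  assumes "\<exists>n. a $$ n \<noteq> 0 \<and> \<not> 3 dvd n" "\<not> (l0 = l1 \<and> l1 = l2)"
  shows "comb l0 l1 l2 \<noteq> 0"
proof -
  obtain n where n: "a $$ n \<noteq> 0" "\<not> 3 dvd n" using assms(1) by blast
  have "comb l0 l1 l2 $$ n \<noteq> 0"
    unfolding comb_nth using coef_nz[OF _ _ _ assms(2)] zeta_powi_cases[OF n(2)] n(1) by simp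
  thus ?thesis by (auto simp: fls_eq_iff)
qed

lemma comb_nz3:
  assumes "\<exists>n. a $$ n \<noteq> 0 \<and> 3 dvd n"
  shows "comb True True True \<noteq> 0"
proof -
  obtain n where n: "a $$ n \<noteq> 0" "3 dvd n" using assms(1) by blast
  have "n mod 3 = 0" using n(2) by presburger
  hence "zeta powi n = 1" using zeta_powi by simp
  moreover have "(1::'k) + 1 + 1 = 1" using k2 by simp
  ultimately have "comb True True True $$ n \<noteq> 0" unfolding comb_nth using n(1) by simp
  thus ?thesis by (auto simp: fls_eq_iff)
qed

lemma notAS_ccs:
  assumes "comb l0 l1 l2 \<noteq> 0" "x \<in> Lp"
  shows "x^2 - x \<noteq> ccs l0 l1 l2"
  unfolding ccs_comb using notAS_Lp[OF comb_std assms(1) assms(2)] .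

lemma bminus: "x - y = (x::'b) + y" using c2_minus[OF b2] .

end

context thm5b begin

lemma b1_notin_Fd:
  assumes H1: "\<exists>n. a $$ n \<noteq> 0 \<and> \<not> 3 dvd n"
  shows "b1 \<notin> Fd"
proof
  assume b: "b1 \<in> Fd"
  interpret A: ASext Lp \<alpha> "\<iota> a" by (rule AS0)
  obtain x where x: "x \<in> Lp" "x^2 - x = cc 1 \<or> x^2 - x = cc 1 - \<iota> a"
    using A.descent[OF cc_Lp b[unfolded Fd_def] b1_root] by blast
  have e: "ccs False True False = cc 1" "ccs True True False = cc 1 - cc 0"
    unfolding ccs_def bminus by (simp_all add: ac_simps)
  have "comb False True False \<noteq> 0" "comb True True False \<noteq> 0" using comb_nz1[OF H1] by simp_all
  from notAS_ccs[OF this(1) x(1)] notAS_ccs[OF this(2) x(1)]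
  show False using x(2) e cc0 by auto
qed

lemma b2_notin_E2:
  assumes H1: "\<exists>n. a $$ n \<noteq> 0 \<and> \<not> 3 dvd n" and H0: "\<exists>n. a $$ n \<noteq> 0 \<and> 3 dvd n"
  shows "b2 \<notin> E2"
proof
  assume b: "b2 \<in> E2"
  have "ASext Fd b1 (cc 1)"
    unfolding ASext_def using b2 Fd_sub b1_notin_Fd[OF H1] cc_Lp Lp_Fd b1_root
    by (auto simp: algebra_simps)
  then interpret B1: ASext Fd b1 "cc 1" .
  interpret A: ASext Lp \<alpha> "\<iota> a" by (rule AS0)
  have c2F: "cc 2 \<in> Fd" using cc_Lp Lp_Fd by blast
  obtain x where x: "x \<in> Fd" "x^2 - x = cc 2 \<or> x^2 - x = cc 2 - cc 1"
    using B1.descent[OF c2F b[unfolded E2_def] b2_root] by blast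
  have d1: "cc 2 - cc 1 \<in> Lp" using cc_Lp Lp_sub by (blast intro: subfield_diff)
  have "\<exists>y\<in>Lp. y^2 - y = cc 2 \<or> y^2 - y = cc 2 - \<iota> a \<or> y^2 - y = cc 2 - cc 1 \<or> y^2 - y = cc 2 - cc 1 - \<iota> a"
  proof (cases "x^2 - x = cc 2")
    case True
    thus ?thesis using A.descent[OF cc_Lp x(1)[unfolded Fd_def]] by blast
  next
    case False
    hence "x^2 - x = cc 2 - cc 1" using x(2) by blast
    thus ?thesis using A.descent[OF d1 x(1)[unfolded Fd_def]] by blast
  qed
  then obtain y where y: "y \<in> Lp"
    "y^2 - y = cc 2 \<or> y^2 - y = cc 2 - \<iota> a \<or> y^2 - y = cc 2 - cc 1 \<or> y^2 - y = cc 2 - cc 1 - \<iota> a"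
    by blast
  have e: "ccs False False True = cc 2" "ccs True False True = cc 2 - cc 0"
      "ccs False True True = cc 2 - cc 1" "ccs True True True = cc 2 - cc 1 - cc 0"
    unfolding ccs_def bminus by (simp_all add: ac_simps)
  have "comb False False True \<noteq> 0" "comb True False True \<noteq> 0" "comb False True True \<noteq> 0"
    using comb_nz1[OF H1] by simp_all
  from notAS_ccs[OF this(1) y(1)] notAS_ccs[OF this(2) y(1)] notAS_ccs[OF this(3) y(1)]
    notAS_ccs[OF comb_nz3[OF H0] y(1)]
  show False using y(2) e cc0 by auto
qed

end


context thm5 begin

lemma ph_T: "ph j T = z^j * T"
  unfolding T_def by (simp add: rot_X \<iota>_mult z_pow)

lemma of_bool_01: "(of_bool e :: 'b) = 0 \<or> of_bool e = 1" by (cases e) simp_all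

lemma of_bool_inj: "(of_bool e :: 'b) = of_bool e' \<Longrightarrow> e = e'"
  by (cases e; cases e') simp_all

end

context thm5b begin

lemma card_le6:
  assumes "b1 = \<alpha>" "b2 = \<alpha>"
  shows "card (carrier G) \<le> 6"
proof -
  define f where "f g = (g T, g \<alpha>)" for g :: "'b \<Rightarrow> 'b"
  have Ball: "B i = \<alpha>" for i using B_cases[of i] assms by auto
  have inj: "inj_on f (carrier G)"
  proof (rule inj_onI)
    fix g h assume g: "g \<in> carrier G" and h: "h \<in> carrier G" and "f g = f h"
    hence "g T = h T" "g \<alpha> = h \<alpha>" unfolding f_def by auto
    thus "g = h" using G_determined[OF g h] assms by simp
  qed
  have sub: "f ` carrier G \<subseteq> {T, z * T, z^2 * T} \<times> {\<alpha>, \<alpha> + 1}"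
  proof
    fix p assume "p \<in> f ` carrier G"
    then obtain g where g: "g \<in> carrier G" "p = f g" by blast
    obtain j where j: "j < 3" "g T = z^j * T" "\<forall>i. g (B i) = B (i + j) \<or> g (B i) = B (i + j) + 1"
      using G_struct[OF g(1)] by blast
    have "g T \<in> {T, z * T, z^2 * T}"
    proof -
      have "j = 0 \<or> j = 1 \<or> j = 2" using j(1) by auto
      thus ?thesis using j(2) by auto
    qed
    moreover have "g \<alpha> \<in> {\<alpha>, \<alpha> + 1}" using j(3)[rule_format, of 0] Ball by auto
    ultimately show "p \<in> {T, z * T, z^2 * T} \<times> {\<alpha>, \<alpha> + 1}" unfolding g(2) f_def by blast
  qed
  have "card (carrier G) \<le> card ({T, z * T, z^2 * T} \<times> {\<alpha>, \<alpha> + 1})"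
    by (rule card_inj_on_le[OF inj sub]) simp
  also have "\<dots> \<le> 3 * 2" unfolding card_cartesian_product
    by (intro mult_le_mono) (auto intro!: card_insert_le_m1 simp: card_insert_if)
  finally show ?thesis by simp
qed

lemma psi1_ex:
  assumes "j < 3"
  shows "\<exists>\<psi>. fhom Fd \<psi> \<and> (\<forall>x\<in>Lp. \<psi> x = ph j x) \<and> \<psi> \<alpha> = B j + of_bool e0"
proof -
  have "(B j + of_bool e0)^2 - (B j + of_bool e0) = cc j"
    by (rule root_shift[OF B_root of_bool_01])
  thus ?thesis by (rule ext_emb)
qed

lemma psi2_ex:
  assumes H1: "\<exists>n. a $$ n \<noteq> 0 \<and> \<not> 3 dvd n" and j: "j < 3"
  shows "\<exists>\<psi>. fhom E2 \<psi> \<and> (\<forall>x\<in>Lp. \<psi> x = ph j x) \<and> \<psi> \<alpha> = B j + of_bool e0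
     \<and> \<psi> b1 = B (1 + j) + of_bool e1"
proof -
  obtain \<psi>1 where p1: "fhom Fd \<psi>1" "\<forall>x\<in>Lp. \<psi>1 x = ph j x" "\<psi>1 \<alpha> = B j + of_bool e0"
    using psi1_ex[OF j] by blast
  have r: "(B (1 + j) + of_bool e1)^2 - (B (1 + j) + of_bool e1) = cc (1 + j)"
    by (rule root_shift[OF B_root of_bool_01])
  obtain \<psi>2 where p2: "fhom E2 \<psi>2" "\<forall>x\<in>Fd. \<psi>2 x = \<psi>1 x" "\<psi>2 b1 = B (1 + j) + of_bool e1"
    using ext_step[OF Fd_sub Lp_Fd b1_notin_Fd[OF H1] b1_root p1(1,2) r] unfolding E2_def by blast
  show ?thesis using p1 p2 Lp_Fd alpha_Fd by (intro exI[of _ \<psi>2]) auto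
qed

lemma psi3_ex:
  assumes H1: "\<exists>n. a $$ n \<noteq> 0 \<and> \<not> 3 dvd n" and H0: "\<exists>n. a $$ n \<noteq> 0 \<and> 3 dvd n" and j: "j < 3"
  shows "\<exists>\<psi>. fhom N \<psi> \<and> (\<forall>x\<in>Lp. \<psi> x = ph j x) \<and> \<psi> \<alpha> = B j + of_bool e0
     \<and> \<psi> b1 = B (1 + j) + of_bool e1 \<and> \<psi> b2 = B (2 + j) + of_bool e2"
proof -
  obtain \<psi>2 where p2: "fhom E2 \<psi>2" "\<forall>x\<in>Lp. \<psi>2 x = ph j x" "\<psi>2 \<alpha> = B j + of_bool e0"
     "\<psi>2 b1 = B (1 + j) + of_bool e1"
    using psi2_ex[OF H1 j] by blast
  have r: "(B (2 + j) + of_bool e2)^2 - (B (2 + j) + of_bool e2) = cc (2 + j)"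
    by (rule root_shift[OF B_root of_bool_01])
  have LE2: "Lp \<subseteq> E2" using Lp_Fd Fd_E2 by blast
  obtain \<psi>3 where p3: "fhom N \<psi>3" "\<forall>x\<in>E2. \<psi>3 x = \<psi>2 x" "\<psi>3 b2 = B (2 + j) + of_bool e2"
    using ext_step[OF E2_sub LE2 b2_notin_E2[OF H1 H0] b2_root p2(1,2) r] unfolding N_E3 by blast
  have "\<alpha> \<in> E2" using alpha_Fd Fd_E2 by blast
  thus ?thesis using p2 p3 LE2 b1_E2 by (intro exI[of _ \<psi>3]) auto
qed

lemma aut_from_psi:
  assumes p: "fhom N \<psi>" "\<forall>x\<in>Lp. \<psi> x = ph j x"
    and v: "\<psi> \<alpha> = B j + of_bool e0" "\<psi> b1 = B (1 + j) + of_bool e1" "\<psi> b2 = B (2 + j) + of_bool e2"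
  shows "\<exists>g\<in>carrier G. g T = z^j * T \<and> g \<alpha> = B j + of_bool e0 \<and> g b1 = B (1 + j) + of_bool e1
      \<and> g b2 = B (2 + j) + of_bool e2"
proof -
  have Bi: "\<psi> (B i) = B (i + j) \<or> \<psi> (B i) = B (i + j) + 1" for i
  proof -
    have m: "B i = B (i mod 3)" "B (i + j) = B (i mod 3 + j)"
      using B_mod[of i] B_mod[of "i + j"] B_mod[of "i mod 3 + j"] by (simp_all add: mod_add_left_eq)
    consider "i mod 3 = 0" | "i mod 3 = 1" | "i mod 3 = 2" by linarith
    thus ?thesis
    proof cases
      case 1 thus ?thesis using m v(1) B012 of_bool_01[of e0] by auto
    next
      case 2 thus ?thesis using m v(2) B012 of_bool_01[of e1] by (auto simp: add.commute)
    next
      case 3 thus ?thesis using m v(3) B012 of_bool_01[of e2] by (auto simp: add.commute)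
    qed
  qed
  have Bi': "\<forall>i. \<psi> (B i) = B (i + j) \<or> \<psi> (B i) = B (i + j) + 1" using Bi by blast
  have g: "(\<lambda>x. if x \<in> N then \<psi> x else x) \<in> carrier G" by (rule mk_aut[OF p Bi'])
  have "T \<in> N" "\<alpha> \<in> N" "b1 \<in> N" "b2 \<in> N" using T_Lp Lp_N S_N by auto
  thus ?thesis using g p(2) T_Lp ph_T v by (intro bexI[OF _ g]) simp
qed

lemma card_ge24:
  assumes H1: "\<exists>n. a $$ n \<noteq> 0 \<and> \<not> 3 dvd n" and H0: "\<exists>n. a $$ n \<noteq> 0 \<and> 3 dvd n"
  shows "card (carrier G) \<noteq> 12"
proof
  assume c12: "card (carrier G) = 12"
  have fin: "finite (carrier G)"
  proof (rule ccontr)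
    assume "\<not> finite (carrier G)"
    hence "card (carrier G) = 0" by simp
    thus False using c12 by simp
  qed
  define D where "D = {0::nat, 1, 2} \<times> (UNIV :: bool set) \<times> (UNIV :: bool set) \<times> (UNIV :: bool set)"
  have ex: "\<exists>g\<in>carrier G. g T = z^j * T \<and> g \<alpha> = B j + of_bool e0 \<and> g b1 = B (1 + j) + of_bool e1
      \<and> g b2 = B (2 + j) + of_bool e2" if j3: "j < 3" for j e0 e1 e2
  proof -
    obtain \<psi> where "fhom N \<psi> \<and> (\<forall>x\<in>Lp. \<psi> x = ph j x) \<and> \<psi> \<alpha> = B j + of_bool e0
     \<and> \<psi> b1 = B (1 + j) + of_bool e1 \<and> \<psi> b2 = B (2 + j) + of_bool e2"
      using psi3_ex[OF H1 H0 j3] by blast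
    thus ?thesis using aut_from_psi by blast
  qed
  define F where "F d = (SOME g. g \<in> carrier G \<and> g T = z^(fst d) * T \<and> g \<alpha> = B (fst d) + of_bool (fst (snd d))
      \<and> g b1 = B (1 + fst d) + of_bool (fst (snd (snd d))) \<and> g b2 = B (2 + fst d) + of_bool (snd (snd (snd d))))" for d
  have F: "F d \<in> carrier G \<and> F d T = z^(fst d) * T \<and> F d \<alpha> = B (fst d) + of_bool (fst (snd d))"
    if "d \<in> D" for d
  proof -
    have "fst d < 3" using that unfolding D_def by auto
    from someI_ex[OF ex[OF this, of "fst (snd d)" "fst (snd (snd d))" "snd (snd (snd d))", unfolded Bex_def]]
    show ?thesis unfolding F_def by blast
  qed
  have F2: "F d b1 = B (1 + fst d) + of_bool (fst (snd (snd d))) \<and> F d b2 = B (2 + fst d) + of_bool (snd (snd (snd d)))"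
    if "d \<in> D" for d
  proof -
    have "fst d < 3" using that unfolding D_def by auto
    from someI_ex[OF ex[OF this, of "fst (snd d)" "fst (snd (snd d))" "snd (snd (snd d))", unfolded Bex_def]]
    show ?thesis unfolding F_def by blast
  qed
  have inj: "inj_on F D"
  proof (rule inj_onI)
    fix d d' assume d: "d \<in> D" "d' \<in> D" "F d = F d'"
    have "fst d < 3" "fst d' < 3" using d unfolding D_def by auto
    moreover have "z^(fst d) * T = z^(fst d') * T"
    proof -
      have "z^(fst d) * T = F d T" using F[OF d(1)] by simp
      also have "\<dots> = F d' T" using d(3) by simp
      also have "\<dots> = z^(fst d') * T" using F[OF d(2)] by simp
      finally show ?thesis .
    qed
    ultimately have j: "fst d = fst d'" by (rule zpow_T_inj)
    have "of_bool (fst (snd d)) = (of_bool (fst (snd d')) :: 'b)" using F[OF d(1)] F[OF d(2)] d(3) j by simp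
    moreover have "of_bool (fst (snd (snd d))) = (of_bool (fst (snd (snd d'))) :: 'b)"
      "of_bool (snd (snd (snd d))) = (of_bool (snd (snd (snd d'))) :: 'b)"
      using F2[OF d(1)] F2[OF d(2)] d(3) j by simp_all
    ultimately have "fst (snd d) = fst (snd d')" "fst (snd (snd d)) = fst (snd (snd d'))"
      "snd (snd (snd d)) = snd (snd (snd d'))" using of_bool_inj by blast+
    thus "d = d'" using j by (simp add: prod_eq_iff)
  qed
  have "F ` D \<subseteq> carrier G" using F by blast
  hence "card D \<le> 12" using card_inj_on_le[OF inj _ fin] c12 by simp
  moreover have "card D = 24" unfolding D_def by (simp add: card_cartesian_product del: UNIV_Times_UNIV)
  ultimately show False by simp
qed

end


section \<open>Affine maps of F_2^2 and A_4\<close>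

definition enc :: "bool \<times> bool \<Rightarrow> nat" where
  "enc p = (if p = (False, False) then 1 else if p = (True, False) then 2
            else if p = (False, True) then 3 else 4)"

definition dec :: "nat \<Rightarrow> bool \<times> bool" where
  "dec n = (if n = 1 then (False, False) else if n = 2 then (True, False)
            else if n = 3 then (False, True) else (True, True))"

definition Pm :: "(bool \<times> bool \<Rightarrow> bool \<times> bool) \<Rightarrow> nat \<Rightarrow> nat" where
  "Pm f = (\<lambda>n. if n \<in> {1..4} then enc (f (dec n)) else n)"

lemma dec_enc [simp]: "dec (enc p) = p"
  unfolding dec_def enc_def by (cases p) auto

lemma enc_range: "enc p \<in> {1..4}"
  unfolding enc_def by auto

lemma enc_bounds [simp]: "Suc 0 \<le> enc p" "enc p \<le> 4"
  unfolding enc_def by auto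

lemma enc_dec: "n \<in> {1..4} \<Longrightarrow> enc (dec n) = n"
  unfolding dec_def enc_def by auto

lemma Pm_comp: "Pm (f \<circ> g) = Pm f \<circ> Pm g"
  unfolding Pm_def by (auto simp: fun_eq_iff)

lemma Pm_inj: "Pm f = Pm g \<Longrightarrow> f = g"
proof
  fix p assume "Pm f = Pm g"
  hence "Pm f (enc p) = Pm g (enc p)" by simp
  hence "enc (f p) = enc (g p)" unfolding Pm_def by simp
  hence "dec (enc (f p)) = dec (enc (g p))" by simp
  thus "f p = g p" by simp
qed

definition tr :: "bool \<Rightarrow> bool \<Rightarrow> bool \<times> bool \<Rightarrow> bool \<times> bool" where
  "tr e0 e1 p = (fst p \<noteq> e0, snd p \<noteq> e1)"

definition lin :: "nat \<Rightarrow> bool \<times> bool \<Rightarrow> bool \<times> bool" where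
  "lin j p = (if j = 0 then p else if j = 1 then (fst p \<noteq> snd p, fst p) else (snd p, fst p \<noteq> snd p))"

definition aff :: "nat \<Rightarrow> bool \<Rightarrow> bool \<Rightarrow> bool \<times> bool \<Rightarrow> bool \<times> bool" where
  "aff j e0 e1 = lin j \<circ> tr e0 e1"

lemma evenperm_two:
  assumes "a \<noteq> b" "c \<noteq> (d::nat)"
  shows "evenperm (transpose a b \<circ> transpose c d)"
  using assms by (simp add: evenperm_comp permutation_swap_id evenperm_swap)

lemma permutes_two:
  assumes "a \<in> S" "b \<in> S" "c \<in> S" "d \<in> S"
  shows "transpose a b \<circ> transpose c d permutes S"
  using assms by (intro permutes_compose permutes_swap_id)

lemma Pm_1: "Pm f (Suc 0) = enc (f (False, False))" unfolding Pm_def dec_def by simp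
lemma Pm_2: "Pm f 2 = enc (f (True, False))" unfolding Pm_def dec_def by simp
lemma Pm_3: "Pm f 3 = enc (f (False, True))" unfolding Pm_def dec_def by simp
lemma Pm_4: "Pm f 4 = enc (f (True, True))" unfolding Pm_def dec_def by simp
lemma Pm_out: "n \<notin> {1..4} \<Longrightarrow> Pm f n = n" unfolding Pm_def by auto

lemma tp_out: "n \<notin> {1..4} \<Longrightarrow> a \<in> {1..4} \<Longrightarrow> b \<in> {1..4} \<Longrightarrow> transpose a b n = (n::nat)"
  unfolding transpose_def by auto

lemma Pm_trTT: "Pm (tr True True) = transpose 1 4 \<circ> transpose 2 3"
proof
  fix n :: nat
  show "Pm (tr True True) n = (transpose 1 4 \<circ> transpose 2 3) n"
  proof (cases "n \<in> {1..4}")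
    case False thus ?thesis by (simp add: Pm_out tp_out)
  next
    case True
    hence "n = 1 \<or> n = 2 \<or> n = 3 \<or> n = 4" by auto
    thus ?thesis by (elim disjE) (simp_all add: Pm_1 Pm_2 Pm_3 Pm_4 enc_def tr_def transpose_def)
  qed
qed

lemma Pm_trTF: "Pm (tr True False) = transpose 1 2 \<circ> transpose 3 4"
proof
  fix n :: nat
  show "Pm (tr True False) n = (transpose 1 2 \<circ> transpose 3 4) n"
  proof (cases "n \<in> {1..4}")
    case False thus ?thesis by (simp add: Pm_out tp_out)
  next
    case True
    hence "n = 1 \<or> n = 2 \<or> n = 3 \<or> n = 4" by auto
    thus ?thesis by (elim disjE) (simp_all add: Pm_1 Pm_2 Pm_3 Pm_4 enc_def tr_def transpose_def)
  qed
qed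

lemma Pm_trFT: "Pm (tr False True) = transpose 1 3 \<circ> transpose 2 4"
proof
  fix n :: nat
  show "Pm (tr False True) n = (transpose 1 3 \<circ> transpose 2 4) n"
  proof (cases "n \<in> {1..4}")
    case False thus ?thesis by (simp add: Pm_out tp_out)
  next
    case True
    hence "n = 1 \<or> n = 2 \<or> n = 3 \<or> n = 4" by auto
    thus ?thesis by (elim disjE) (simp_all add: Pm_1 Pm_2 Pm_3 Pm_4 enc_def tr_def transpose_def)
  qed
qed

lemma Pm_trFF: "Pm (tr False False) = transpose 1 1 \<circ> transpose 1 1"
proof
  fix n :: nat
  show "Pm (tr False False) n = (transpose 1 1 \<circ> transpose 1 1) n"
  proof (cases "n \<in> {1..4}")
    case False thus ?thesis by (simp add: Pm_out tp_out)
  next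
    case True
    hence "n = 1 \<or> n = 2 \<or> n = 3 \<or> n = 4" by auto
    thus ?thesis by (elim disjE) (simp_all add: Pm_1 Pm_2 Pm_3 Pm_4 enc_def tr_def transpose_def)
  qed
qed

lemma Pm_lin0: "Pm (lin 0) = transpose 1 1 \<circ> transpose 1 1"
proof
  fix n :: nat
  show "Pm (lin 0) n = (transpose 1 1 \<circ> transpose 1 1) n"
  proof (cases "n \<in> {1..4}")
    case False thus ?thesis by (simp add: Pm_out tp_out)
  next
    case True
    hence "n = 1 \<or> n = 2 \<or> n = 3 \<or> n = 4" by auto
    thus ?thesis by (elim disjE) (simp_all add: Pm_1 Pm_2 Pm_3 Pm_4 enc_def lin_def transpose_def)
  qed
qed

lemma Pm_lin1: "Pm (lin 1) = transpose 2 3 \<circ> transpose 2 4"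
proof
  fix n :: nat
  show "Pm (lin 1) n = (transpose 2 3 \<circ> transpose 2 4) n"
  proof (cases "n \<in> {1..4}")
    case False thus ?thesis by (simp add: Pm_out tp_out)
  next
    case True
    hence "n = 1 \<or> n = 2 \<or> n = 3 \<or> n = 4" by auto
    thus ?thesis by (elim disjE) (simp_all add: Pm_1 Pm_2 Pm_3 Pm_4 enc_def lin_def transpose_def)
  qed
qed

lemma Pm_lin2: "Pm (lin 2) = transpose 2 4 \<circ> transpose 2 3"
proof
  fix n :: nat
  show "Pm (lin 2) n = (transpose 2 4 \<circ> transpose 2 3) n"
  proof (cases "n \<in> {1..4}")
    case False thus ?thesis by (simp add: Pm_out tp_out)
  next
    case True
    hence "n = 1 \<or> n = 2 \<or> n = 3 \<or> n = 4" by auto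
    thus ?thesis by (elim disjE) (simp_all add: Pm_1 Pm_2 Pm_3 Pm_4 enc_def lin_def transpose_def)
  qed
qed

lemma good_perm: "a \<noteq> b \<Longrightarrow> c \<noteq> d \<Longrightarrow> a \<in> {1..4} \<Longrightarrow> b \<in> {1..4} \<Longrightarrow> c \<in> {1..4} \<Longrightarrow> d \<in> {1..4}
     \<Longrightarrow> transpose a b \<circ> transpose c d \<in> carrier (alt_group 4)"
  unfolding alt_group_carrier using evenperm_two permutes_two[of a "{1..4}" b c d] by simp

lemma good_perm_id: "transpose 1 1 \<circ> transpose 1 1 \<in> carrier (alt_group 4)"
  unfolding alt_group_carrier by simp

lemma Pm_tr_alt: "Pm (tr e0 e1) \<in> carrier (alt_group 4)"
proof -
  have "Pm (tr True True) \<in> carrier (alt_group 4)" unfolding Pm_trTT by (rule good_perm) simp_all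
  moreover have "Pm (tr True False) \<in> carrier (alt_group 4)" unfolding Pm_trTF by (rule good_perm) simp_all
  moreover have "Pm (tr False True) \<in> carrier (alt_group 4)" unfolding Pm_trFT by (rule good_perm) simp_all
  moreover have "Pm (tr False False) \<in> carrier (alt_group 4)" unfolding Pm_trFF by (rule good_perm_id)
  ultimately show ?thesis by (cases e0; cases e1) simp_all
qed

lemma Pm_lin_alt: "j < 3 \<Longrightarrow> Pm (lin j) \<in> carrier (alt_group 4)"
proof -
  assume "j < 3"
  hence "j = 0 \<or> j = 1 \<or> j = 2" by auto
  moreover have "Pm (lin 0) \<in> carrier (alt_group 4)" unfolding Pm_lin0 by (rule good_perm_id)
  moreover have "Pm (lin 1) \<in> carrier (alt_group 4)" unfolding Pm_lin1 by (rule good_perm) simp_all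
  moreover have "Pm (lin 2) \<in> carrier (alt_group 4)" unfolding Pm_lin2 by (rule good_perm) simp_all
  ultimately show ?thesis by auto
qed

lemma Pm_aff_alt: "j < 3 \<Longrightarrow> Pm (aff j e0 e1) \<in> carrier (alt_group 4)"
  unfolding aff_def Pm_comp
  using alt_group_is_group[of 4] Pm_tr_alt Pm_lin_alt
  by (metis alt_group_mult group.subgroup_self subgroup.m_closed)

lemma aff_inj:
  assumes "j < 3" "j' < 3" "aff j e0 e1 = aff j' e0' e1'"
  shows "j = j' \<and> e0 = e0' \<and> e1 = e1'"
proof -
  have h: "aff j e0 e1 p = aff j' e0' e1' p" for p using assms(3) by simp
  have "j = 0 \<or> j = 1 \<or> j = 2" "j' = 0 \<or> j' = 1 \<or> j' = 2" using assms(1,2) by auto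
  thus ?thesis using h[of "(False, False)"] h[of "(True, False)"]
    by (auto simp: aff_def lin_def tr_def)
qed


context thm5 begin

lemma ob_add: "of_bool x + of_bool y = (of_bool (x \<noteq> y) :: 'b)"
  using b2 by (cases x; cases y) simp_all

lemma cb_self: "x + x = (0::'b)" using c2_add_self[OF b2] .
lemma cb_self2: "x + (x + y) = (y::'b)" by (simp add: add.assoc[symmetric] cb_self)

definition Ef :: "'b \<Rightarrow> 'b \<Rightarrow> 'b" where "Ef x y = x * y + x^2 + y^2"

lemma Ef_rot1: "Ef y (x + y) = Ef x y"
proof -
  have "Ef y (x + y) = x * y + x^2 + y^2 + (y * y + y * y) + (x * y + x * y)"
    unfolding Ef_def by (simp add: algebra_simps power2_eq_square)
  also have "\<dots> = Ef x y" unfolding Ef_def by (simp only: cb_self add_0_right)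
  finally show ?thesis .
qed

lemma Ef_rot2: "Ef (x + y) x = Ef x y"
proof -
  have "Ef (x + y) x = x * y + x^2 + y^2 + (x * x + x * x) + (x * y + x * y)"
    unfolding Ef_def by (simp add: algebra_simps power2_eq_square)
  also have "\<dots> = Ef x y" unfolding Ef_def by (simp only: cb_self add_0_right)
  finally show ?thesis .
qed

lemma Ef_shift: "Ef (x + s) (y + t) = Ef x y + (t * x + s * y + (s * t + s^2 + t^2))"
proof -
  have "Ef (x + s) (y + t) = Ef x y + (t * x + s * y + (s * t + s^2 + t^2)) + (x * s + x * s) + (y * t + y * t)"
    unfolding Ef_def by (simp add: algebra_simps power2_eq_square)
  thus ?thesis by (simp only: cb_self add_0_right)
qed

lemma notin_shift: "x \<notin> Lp \<Longrightarrow> c \<in> Lp \<Longrightarrow> x + c \<noteq> 0"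
proof
  assume "x \<notin> Lp" "c \<in> Lp" "x + c = 0"
  hence "x = - c" by (simp add: eq_neg_iff_add_eq_0)
  thus False using \<open>x \<notin> Lp\<close> \<open>c \<in> Lp\<close> Lp_sub subfield_uminus by metis
qed

lemma ob_Lp: "(of_bool e :: 'b) \<in> Lp" using Lp_sub by (cases e) (simp_all add: subfield_0 subfield_1)

end

context thm5b begin

lemma G_comp: "g \<in> carrier G \<Longrightarrow> h \<in> carrier G \<Longrightarrow> g \<circ> h \<in> carrier G"
proof -
  assume g: "g \<in> carrier G" and h: "h \<in> carrier G"
  interpret gg: fhom N g using G_fhom[OF g] .
  interpret hh: fhom N h using G_fhom[OF h] .
  have bg: "bij_betw g N N" and bh: "bij_betw h N N" using g h G_carrier by auto
  have hN: "x \<in> N \<Longrightarrow> h x \<in> N" for x using bh by (auto simp: bij_betw_def)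
  have "hom_on N (g \<circ> h)" unfolding hom_on_def
    using hN N_sub by (simp add: gg.add gg.mult hh.add hh.mult subfield_add subfield_mult)
  moreover have "bij_betw (g \<circ> h) N N" using bij_betw_trans[OF bh bg] .
  moreover have "\<forall>x\<in>Kp. (g \<circ> h) x = x" using g h G_carrier by auto
  moreover have "\<forall>x. x \<notin> N \<longrightarrow> (g \<circ> h) x = x" using g h G_carrier by auto
  ultimately show ?thesis unfolding G_carrier by blast
qed

lemma G_mult: "mult G = (\<circ>)" unfolding G_def galois_group_def by simp

end

locale thm5c = thm5b +
  assumes b2_def: "b2 = \<alpha> + b1" and H1: "\<exists>n. a $$ n \<noteq> 0 \<and> \<not> 3 dvd n"
begin

lemma b2_E2: "b2 \<in> E2" unfolding b2_def using alpha_Fd Fd_E2 b1_E2 E2_sub subfield_add by blast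

lemma N_eq_E2: "N = E2"
proof -
  have "insert b2 E2 = E2" using b2_E2 by blast
  thus ?thesis using N_E3 gen_field_idem[OF E2_sub] by simp
qed

lemma B_sum: "B j + B (1 + j) = B (2 + j)"
proof -
  consider "j mod 3 = 0" | "j mod 3 = 1" | "j mod 3 = 2" by linarith
  thus ?thesis
  proof cases
    case 1
    hence "(1 + j) mod 3 = 1" "(2 + j) mod 3 = 2" by presburger+
    thus ?thesis using 1 b2_def unfolding B_def by simp
  next
    case 2
    hence "(1 + j) mod 3 = 2" "(2 + j) mod 3 = 0" by presburger+
    hence "B j + B (1 + j) = b1 + (\<alpha> + b1)" "B (2 + j) = \<alpha>" using 2 b2_def unfolding B_def by simp_all
    thus ?thesis using b2 by simp
  next
    case 3
    hence "(1 + j) mod 3 = 0" "(2 + j) mod 3 = 1" by presburger+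
    hence "B j + B (1 + j) = (\<alpha> + b1) + \<alpha>" "B (2 + j) = b1" using 3 b2_def unfolding B_def by simp_all
    thus ?thesis using b2 by simp
  qed
qed

lemma construct2:
  assumes j: "j < 3"
  shows "\<exists>g\<in>carrier G. g T = z^j * T \<and> g \<alpha> = B j + of_bool e0 \<and> g b1 = B (1 + j) + of_bool e1"
proof -
  obtain \<psi> where p: "fhom E2 \<psi>" "\<forall>x\<in>Lp. \<psi> x = ph j x" "\<psi> \<alpha> = B j + of_bool e0"
     "\<psi> b1 = B (1 + j) + of_bool e1"
    using psi2_ex[OF H1 j] by blast
  interpret pp: fhom E2 \<psi> by fact
  have "\<psi> b2 = \<psi> \<alpha> + \<psi> b1" unfolding b2_def using alpha_Fd Fd_E2 b1_E2 by (simp add: pp.add subset_iff)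
  also have "\<dots> = (B j + B (1 + j)) + (of_bool e0 + of_bool e1)" using p(3,4) by (simp add: ac_simps)
  also have "\<dots> = B (2 + j) + of_bool (e0 \<noteq> e1)" by (simp only: B_sum ob_add)
  finally have "\<psi> b2 = B (2 + j) + of_bool (e0 \<noteq> e1)" .
  from aut_from_psi[OF p(1)[folded N_eq_E2] p(2) p(3) p(4) this] show ?thesis by blast
qed

lemma params:
  assumes g: "g \<in> carrier G"
  shows "\<exists>j e0 e1. j < 3 \<and> g T = z^j * T \<and> g \<alpha> = B j + of_bool e0 \<and> g b1 = B (1 + j) + of_bool e1"
proof -
  obtain j where j: "j < 3" "g T = z^j * T" "\<forall>i. g (B i) = B (i + j) \<or> g (B i) = B (i + j) + 1"
    using G_struct[OF g] by blast
  have "\<exists>e0. g \<alpha> = B j + of_bool e0"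
    using j(3)[rule_format, of 0] B012 by (metis add.right_neutral of_bool_eq(1) of_bool_eq(2) add_0)
  moreover have "\<exists>e1. g b1 = B (1 + j) + of_bool e1"
    using j(3)[rule_format, of 1] B012 by (metis add.right_neutral of_bool_eq(1) of_bool_eq(2) add.commute)
  ultimately show ?thesis using j by blast
qed

end


context thm5c begin

definition "wp p = Ef (\<alpha> + of_bool (fst p)) (b1 + of_bool (snd p))"

lemma b1_notin_Lp: "b1 \<notin> Lp" using b1_notin_Fd[OF H1] Lp_Fd by blast

lemma ab1_notin_Lp: "\<alpha> + b1 \<notin> Lp"
proof
  assume h: "\<alpha> + b1 \<in> Lp"
  have "b1 = (\<alpha> + b1) + \<alpha>" by (simp add: add.commute cb_self2)
  also have "\<dots> \<in> Fd" using h Lp_Fd alpha_Fd Fd_sub subfield_add by blast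
  finally show False using b1_notin_Fd[OF H1] by blast
qed

lemma wp_inj: "wp p = wp q \<Longrightarrow> p = q"
proof (rule ccontr)
  assume eq: "wp p = wp q" and ne: "p \<noteq> q"
  obtain u v u' v' where pq: "p = (u, v)" "q = (u', v')" by fastforce
  define x where "x = \<alpha> + of_bool u'"
  define y where "y = b1 + of_bool v'"
  define s where "s = (of_bool (u \<noteq> u') :: 'b)"
  define t where "t = (of_bool (v \<noteq> v') :: 'b)"
  have xs: "\<alpha> + of_bool u = x + s" unfolding x_def s_def
    by (cases u; cases u') (simp_all add: ac_simps b2)
  have yt: "b1 + of_bool v = y + t" unfolding y_def t_def
    by (cases v; cases v') (simp_all add: ac_simps b2)
  have "Ef (x + s) (y + t) = wp p" unfolding wp_def pq xs[symmetric] yt[symmetric] by simp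
  also have "\<dots> = wp q" by (rule eq)
  also have "\<dots> = Ef x y" unfolding wp_def pq x_def y_def by simp
  finally have "Ef (x + s) (y + t) = Ef x y" .
  hence z: "t * x + s * y + (s * t + s^2 + t^2) = 0" unfolding Ef_shift by simp
  consider "u \<noteq> u'" "v = v'" | "u = u'" "v \<noteq> v'" | "u \<noteq> u'" "v \<noteq> v'" using ne pq by auto
  thus False
  proof cases
    case 1
    hence "b1 + (of_bool v' + 1) = 0" using z unfolding s_def t_def y_def by (simp add: ac_simps)
    thus False using notin_shift[OF b1_notin_Lp] ob_Lp Lp_sub subfield_add subfield_1 by blast
  next
    case 2
    hence "\<alpha> + (of_bool u' + 1) = 0" using z unfolding s_def t_def x_def by (simp add: ac_simps)
    thus False using notin_shift[OF alpha_notin] ob_Lp Lp_sub subfield_add subfield_1 by blast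
  next
    case 3
    hence "x + y + (1 + 1 + 1) = 0" using z unfolding s_def t_def by (simp add: ac_simps)
    hence "(\<alpha> + b1) + (of_bool u' + of_bool v' + 1) = 0" unfolding x_def y_def using b2 by (simp add: ac_simps)
    moreover have "of_bool u' + of_bool v' + 1 \<in> Lp" using ob_Lp Lp_sub subfield_add subfield_1 by blast
    ultimately show False using notin_shift[OF ab1_notin_Lp] by blast
  qed
qed

lemma ob_N: "(of_bool e :: 'b) \<in> N" using ob_Lp Lp_N by blast

lemma g_wp:
  assumes g: "g \<in> carrier G" and j: "j < 3" and gT: "g T = z^j * T"
    and ga: "g \<alpha> = B j + of_bool e0" and gb: "g b1 = B (1 + j) + of_bool e1"
  shows "g (wp p) = wp (aff j e0 e1 p)"
proof -
  interpret gg: fhom N g using G_fhom[OF g] .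
  obtain u v where p: "p = (u, v)" by fastforce
  have aN: "\<alpha> \<in> N" and bN: "b1 \<in> N" using S_N by auto
  have Eg: "g (Ef x y) = Ef (g x) (g y)" if "x \<in> N" "y \<in> N" for x y
    unfolding Ef_def using that N_sub
    by (simp add: gg.add gg.mult gg.power subfield_add subfield_mult subfield_power)
  have gob: "g (of_bool e) = of_bool e" for e by (cases e) simp_all
  have sh: "g (x + of_bool e) = g x + of_bool e" if "x \<in> N" for x e
    using that ob_N by (simp add: gg.add gob)
  have "g (wp p) = Ef (g \<alpha> + of_bool u) (g b1 + of_bool v)"
    unfolding wp_def p using aN bN ob_N N_sub by (simp add: Eg subfield_add sh)
  also have "\<dots> = Ef (B j + of_bool (u \<noteq> e0)) (B (1 + j) + of_bool (v \<noteq> e1))"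
    unfolding ga gb ob_add[symmetric] by (simp add: ac_simps)
  also have "\<dots> = wp (aff j e0 e1 p)"
  proof -
    define P where "P = (u \<noteq> e0)"
    define Q where "Q = (v \<noteq> e1)"
    have aff: "aff j e0 e1 p = lin j (P, Q)" unfolding aff_def tr_def p P_def Q_def by simp
    have "j = 0 \<or> j = 1 \<or> j = 2" using j by auto
    thus ?thesis
    proof (elim disjE)
      assume "j = 0"
      have "B (Suc 0) = b1" by (simp add: B_def)
      thus ?thesis unfolding aff lin_def wp_def P_def[symmetric] Q_def[symmetric] using \<open>j = 0\<close> by (simp add: B012)
    next
      assume j1: "j = 1"
      have "B j = b1" "B (1 + j) = b2" using j1 by (simp_all add: B_def)
      hence "B j = b1" "B (1 + j) = \<alpha> + b1" using b2_def by simp_all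
      hence "Ef (B j + of_bool P) (B (1 + j) + of_bool Q)
           = Ef (b1 + of_bool P) ((\<alpha> + of_bool (P \<noteq> Q)) + (b1 + of_bool P))"
        unfolding ob_add[symmetric] using b2 by (simp add: algebra_simps)
      also have "\<dots> = Ef (\<alpha> + of_bool (P \<noteq> Q)) (b1 + of_bool P)" by (rule Ef_rot1)
      finally show ?thesis unfolding aff lin_def wp_def P_def[symmetric] Q_def[symmetric] using j1 by simp
    next
      assume j2: "j = 2"
      have "B j = b2" "B (1 + j) = \<alpha>" using j2 by (simp_all add: B_def)
      hence "B j = \<alpha> + b1" "B (1 + j) = \<alpha>" using b2_def by simp_all
      hence "Ef (B j + of_bool P) (B (1 + j) + of_bool Q)
           = Ef ((\<alpha> + of_bool Q) + (b1 + of_bool (P \<noteq> Q))) (\<alpha> + of_bool Q)"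
        unfolding ob_add[symmetric] using b2 by (simp add: algebra_simps)
      also have "\<dots> = Ef (\<alpha> + of_bool Q) (b1 + of_bool (P \<noteq> Q))" by (rule Ef_rot2)
      finally show ?thesis unfolding aff lin_def wp_def P_def[symmetric] Q_def[symmetric] using j2 by simp
    qed
  qed
  finally show ?thesis .
qed

definition "Ag g = (\<lambda>p. THE q. g (wp p) = wp q)"

lemma Ag_eq:
  assumes "g \<in> carrier G" "j < 3" "g T = z^j * T" "g \<alpha> = B j + of_bool e0" "g b1 = B (1 + j) + of_bool e1"
  shows "Ag g = aff j e0 e1"
proof
  fix p
  show "Ag g p = aff j e0 e1 p"
    unfolding Ag_def using g_wp[OF assms] wp_inj by (intro the_equality) auto
qed

lemma Ag_params:
  assumes g: "g \<in> carrier G"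
  shows "\<exists>j e0 e1. j < 3 \<and> g T = z^j * T \<and> g \<alpha> = B j + of_bool e0 \<and> g b1 = B (1 + j) + of_bool e1
           \<and> Ag g = aff j e0 e1"
  using params[OF g] Ag_eq[OF g] by blast

lemma g_wp_Ag: "g \<in> carrier G \<Longrightarrow> g (wp p) = wp (Ag g p)"
  using Ag_params g_wp by metis

lemma Ag_comp: "g \<in> carrier G \<Longrightarrow> h \<in> carrier G \<Longrightarrow> Ag (g \<circ> h) = Ag g \<circ> Ag h"
proof
  fix p assume g: "g \<in> carrier G" and h: "h \<in> carrier G"
  have "wp (Ag (g \<circ> h) p) = (g \<circ> h) (wp p)" using g_wp_Ag[OF G_comp[OF g h]] by simp
  also have "\<dots> = g (wp (Ag h p))" using g_wp_Ag[OF h] by simp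
  also have "\<dots> = wp (Ag g (Ag h p))" using g_wp_Ag[OF g] by simp
  finally show "Ag (g \<circ> h) p = (Ag g \<circ> Ag h) p" using wp_inj by simp
qed

definition "Phi g = Pm (Ag g)"

lemma Phi_alt: "g \<in> carrier G \<Longrightarrow> Phi g \<in> carrier (alt_group 4)"
  unfolding Phi_def using Ag_params Pm_aff_alt by metis

lemma Phi_hom: "Phi \<in> hom G (alt_group 4)"
proof (rule homI)
  fix g assume "g \<in> carrier G" thus "Phi g \<in> carrier (alt_group 4)" by (rule Phi_alt)
next
  fix g h assume g: "g \<in> carrier G" and h: "h \<in> carrier G"
  show "Phi (g \<otimes>\<^bsub>G\<^esub> h) = Phi g \<otimes>\<^bsub>alt_group 4\<^esub> Phi h"
    unfolding G_mult alt_group_mult Phi_def Ag_comp[OF g h] Pm_comp ..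
qed

lemma Phi_inj: "inj_on Phi (carrier G)"
proof (rule inj_onI)
  fix g h assume g: "g \<in> carrier G" and h: "h \<in> carrier G" and e: "Phi g = Phi h"
  obtain j e0 e1 where pg: "j < 3" "g T = z^j * T" "g \<alpha> = B j + of_bool e0" "g b1 = B (1 + j) + of_bool e1"
     "Ag g = aff j e0 e1" using Ag_params[OF g] by blast
  obtain j' e0' e1' where ph: "j' < 3" "h T = z^j' * T" "h \<alpha> = B j' + of_bool e0'" "h b1 = B (1 + j') + of_bool e1'"
     "Ag h = aff j' e0' e1'" using Ag_params[OF h] by blast
  have "aff j e0 e1 = aff j' e0' e1'" using e Pm_inj unfolding Phi_def pg(5) ph(5) by blast
  hence eq: "j = j'" "e0 = e0'" "e1 = e1'" using aff_inj[OF pg(1) ph(1)] by auto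
  have T: "g T = h T" and A: "g \<alpha> = h \<alpha>" and B1: "g b1 = h b1" using pg ph eq by simp_all
  interpret gg: fhom N g using G_fhom[OF g] .
  interpret hh: fhom N h using G_fhom[OF h] .
  have ab: "\<alpha> \<in> N" "b1 \<in> N" using S_N by auto
  have "g (\<alpha> + b1) = g \<alpha> + g b1" by (rule gg.add[OF ab])
  moreover have "h (\<alpha> + b1) = h \<alpha> + h b1" by (rule hh.add[OF ab])
  ultimately have "g b2 = h b2" using A B1 b2_def by simp
  thus "g = h" using G_determined[OF g h T A B1] by blast
qed

lemma card_alt: "card (carrier (alt_group 4)) = 12"
  using alt_group_card_carrier[of 4] by (simp add: fact_numeral)

lemma G_finite: "finite (carrier G)"
proof -
  have "finite (carrier (alt_group 4))" using card_alt by (metis card.infinite zero_neq_numeral)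
  thus ?thesis using inj_on_finite[OF Phi_inj] Phi_alt by blast
qed

lemma card_G_ge: "12 \<le> card (carrier G)"
proof -
  define D where "D = {0::nat, 1, 2} \<times> (UNIV :: bool set) \<times> (UNIV :: bool set)"
  define F where "F d = (SOME g. g \<in> carrier G \<and> g T = z^(fst d) * T \<and> g \<alpha> = B (fst d) + of_bool (fst (snd d))
      \<and> g b1 = B (1 + fst d) + of_bool (snd (snd d)))" for d
  have F: "F d \<in> carrier G \<and> F d T = z^(fst d) * T \<and> F d \<alpha> = B (fst d) + of_bool (fst (snd d))
      \<and> F d b1 = B (1 + fst d) + of_bool (snd (snd d))" if "d \<in> D" for d
  proof -
    have "fst d < 3" using that unfolding D_def by auto
    from someI_ex[OF construct2[OF this, of "fst (snd d)" "snd (snd d)", unfolded Bex_def]]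
    show ?thesis unfolding F_def by blast
  qed
  have inj: "inj_on F D"
  proof (rule inj_onI)
    fix d d' assume d: "d \<in> D" "d' \<in> D" "F d = F d'"
    have "fst d < 3" "fst d' < 3" using d unfolding D_def by auto
    moreover have "z^(fst d) * T = z^(fst d') * T"
    proof -
      have "z^(fst d) * T = F d T" using F[OF d(1)] by simp
      also have "\<dots> = F d' T" using d(3) by simp
      also have "\<dots> = z^(fst d') * T" using F[OF d(2)] by simp
      finally show ?thesis .
    qed
    ultimately have j: "fst d = fst d'" by (rule zpow_T_inj)
    have "of_bool (fst (snd d)) = (of_bool (fst (snd d')) :: 'b)"
      "of_bool (snd (snd d)) = (of_bool (snd (snd d')) :: 'b)"
      using F[OF d(1)] F[OF d(2)] d(3) j by simp_all
    hence "fst (snd d) = fst (snd d')" "snd (snd d) = snd (snd d')" using of_bool_inj by blast+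
    thus "d = d'" using j by (simp add: prod_eq_iff)
  qed
  have "F ` D \<subseteq> carrier G" using F by blast
  hence "card D \<le> card (carrier G)" using card_inj_on_le[OF inj _ G_finite] by simp
  moreover have "card D = 12" unfolding D_def by (simp add: card_cartesian_product del: UNIV_Times_UNIV)
  ultimately show ?thesis by simp
qed

theorem G_iso: "G \<cong> alt_group 4"
proof (rule is_isoI)
  have sub: "Phi ` carrier G \<subseteq> carrier (alt_group 4)" using Phi_alt by blast
  have fin: "finite (carrier (alt_group 4))" using card_alt by (metis card.infinite zero_neq_numeral)
  have "card (Phi ` carrier G) = card (carrier G)" using card_image[OF Phi_inj] .
  moreover have "card (Phi ` carrier G) \<le> 12" using card_mono[OF fin sub] card_alt by simp
  ultimately have "card (Phi ` carrier G) = card (carrier (alt_group 4))" using card_G_ge card_alt by simp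
  hence "Phi ` carrier G = carrier (alt_group 4)" using card_subset_eq[OF fin sub] by simp
  hence "bij_betw Phi (carrier G) (carrier (alt_group 4))" using Phi_inj by (simp add: bij_betw_def)
  thus "Phi \<in> iso G (alt_group 4)" unfolding iso_def using Phi_hom by simp
qed

end


context thm5 begin

lemma AS_root_ex: "\<exists>x::'b. x^2 - x = c"
proof -
  have "degree [:- c, -1, 1::'b:] > 0" by simp
  then obtain x where "poly [:- c, -1, 1::'b:] x = 0"
    using \<Omega>_alg_closed unfolding alg_closed_type_def by blast
  hence "x^2 - x = c" by (simp add: algebra_simps power2_eq_square)
  thus ?thesis by blast
qed

lemma rot1_fixed:
  assumes "\<forall>n. \<not> 3 dvd n \<longrightarrow> a $$ n = 0"
  shows "rot (zeta ^ j) a = a"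
proof (rule fls_eqI)
  fix n
  show "rot (zeta ^ j) a $$ n = a $$ n"
  proof (cases "3 dvd n")
    case True
    hence "n mod 3 = 0" by presburger
    hence "zeta powi n = 1" using zeta_powi by simp
    moreover have "(zeta ^ j) powi n = (zeta powi n) ^ j"
      by (simp add: power_int_power power_int_power' mult.commute)
    ultimately have "(zeta ^ j) powi n = 1" by simp
    thus ?thesis by simp
  next
    case False thus ?thesis using assms by simp
  qed
qed

lemma sum_C2:
  assumes "\<forall>n. 3 dvd n \<longrightarrow> a $$ n = 0"
  shows "cc 0 + cc 1 = cc 2"
proof -
  have "comb True True False = comb False False True"
  proof (rule fls_eqI)
    fix n
    show "comb True True False $$ n = comb False False True $$ n"
    proof (cases "3 dvd n")
      case True thus ?thesis using assms by (simp add: comb_nth)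
    next
      case False
      have u: "(zeta powi n)^2 + zeta powi n + 1 = 0" using zeta_powi_cases[OF False] by blast
      have "1 + zeta powi n = (zeta powi n)^2"
      proof -
        have "(zeta powi n)^2 = - (zeta powi n) - 1" using u by (simp add: eq_neg_iff_add_eq_0 algebra_simps)
        thus ?thesis using c2_neg[OF k2] c2_minus[OF k2] by (simp add: add.commute)
      qed
      thus ?thesis by (simp add: comb_nth)
    qed
  qed
  hence "ccs True True False = ccs False False True" by (simp add: ccs_comb)
  thus ?thesis unfolding ccs_def by simp
qed

theorem main:
  "galois_group Kp (galois_closure Kp Fd) \<cong> alt_group 4 \<longleftrightarrow> (\<forall>n. 3 dvd n \<longrightarrow> a $$ n = 0)"
proof (cases "\<forall>n. 3 dvd n \<longrightarrow> a $$ n = 0")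
  case C2: True
  have H1: "\<exists>n. a $$ n \<noteq> 0 \<and> \<not> 3 dvd n"
  proof -
    obtain n where "a $$ n \<noteq> 0" using a_nz fls_eq_iff[of a 0] by auto
    thus ?thesis using C2 by blast
  qed
  obtain b1 where b1: "b1^2 - b1 = cc 1" using AS_root_ex by blast
  have b2: "(\<alpha> + b1)^2 - (\<alpha> + b1) = cc 2"
  proof -
    have "(\<alpha> + b1)^2 - (\<alpha> + b1) = (\<alpha>^2 - \<alpha>) + (b1^2 - b1)"
      using b2 by (simp add: power2_sum algebra_simps)
    also have "\<dots> = cc 0 + cc 1" using \<alpha>_root b1 cc0 by simp
    also have "\<dots> = cc 2" using sum_C2[OF C2] .
    finally show ?thesis .
  qed
  interpret X: thm5c a \<iota> \<alpha> b1 "\<alpha> + b1"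
    by unfold_locales (use b1 b2 H1 in auto)
  have "galois_group Kp (galois_closure Kp Fd) \<cong> alt_group 4"
    using X.G_iso unfolding X.G_def X.N_closure .
  thus ?thesis using C2 by simp
next
  case nC2: False
  then obtain n0 where H0: "a $$ n0 \<noteq> 0" "3 dvd n0" by blast
  have notiso: "\<not> galois_group Kp (galois_closure Kp Fd) \<cong> alt_group 4"
  proof
    assume iso: "galois_group Kp (galois_closure Kp Fd) \<cong> alt_group 4"
    have c12: "card (carrier (alt_group 4)) = 12"
      using alt_group_card_carrier[of 4] by (simp add: fact_numeral)
    show False
    proof (cases "\<forall>n. \<not> 3 dvd n \<longrightarrow> a $$ n = 0")
      case C1: True
      have e: "cc j = cc 0" for j unfolding cc_def using rot1_fixed[OF C1] by (simp add: rot_1)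
      have r: "\<alpha>^2 - \<alpha> = cc 1" "\<alpha>^2 - \<alpha> = cc 2" using \<alpha>_root cc0 e by auto
      interpret X: thm5b a \<iota> \<alpha> \<alpha> \<alpha> by unfold_locales (use r in auto)
      have "card (carrier X.G) = 12"
        using iso_same_card[OF iso] c12 unfolding X.G_def X.N_closure by simp
      thus False using X.card_le6 by simp
    next
      case C3: False
      hence H1: "\<exists>n. a $$ n \<noteq> 0 \<and> \<not> 3 dvd n" by blast
      obtain b1 where b1: "b1^2 - b1 = cc 1" using AS_root_ex by blast
      obtain b2 where b2': "b2^2 - b2 = cc 2" using AS_root_ex by blast
      interpret X: thm5b a \<iota> \<alpha> b1 b2 by unfold_locales (use b1 b2' in auto)
      have "card (carrier X.G) = 12"
        using iso_same_card[OF iso] c12 unfolding X.G_def X.N_closure by simp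
      thus False using X.card_ge24[OF H1] H0 by blast
    qed
  qed
  thus ?thesis using nC2 by simp
qed

end

theorem mainTheorem5:
  fixes a :: "'k::field fls"
    and \<iota> :: "'k fls \<Rightarrow> 'b::field"
    and \<alpha> :: 'b
  assumes k_alg_closed: "alg_closed_type TYPE('k)"
    and k_char: "CHAR('k) = 2"
    and \<Omega>_alg_closed: "alg_closed_type TYPE('b)"
    and \<iota>_hom: "hom_on UNIV \<iota>"
    and a_nz: "a \<noteq> 0"
    and a_std: "standard_form a"
    and \<alpha>_root: "\<alpha>\<^sup>2 - \<alpha> = \<iota> a"
  shows "galois_group (\<iota> ` range (\<lambda>f. fls_compose_power f 3))
            (galois_closure (\<iota> ` range (\<lambda>f. fls_compose_power f 3)) (gen_field (insert \<alpha> (range \<iota>))))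
           \<cong> alt_group 4
         \<longleftrightarrow> (\<forall>n. 3 dvd n \<longrightarrow> fls_nth a n = 0)"
proof -
  interpret thm5 a \<iota> \<alpha> using assms by unfold_locales
  show ?thesis using main unfolding Kp_def Fd_def Lp_def .
qed


end
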